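(* Let $\{S^n\}_{n\in\mathbb{N}}$ be an $\mathbb{R}^h$-valued process of integrable random variables that is strongly regular and strongly nearly additive, and suppose $\sup_{n\in\mathbb{N}}\|\mathbb{E}[S^n]\|/|\Lambda^n|<\infty$. Then the limit $\widehat S=\lim_{n\to\infty}\mathbb{E}[S^n]/|\Lambda^n|$ exists in $\mathbb{R}^h$ and $S^n/|\Lambda^n|\to\widehat S$ almost surely as $n\to\infty$.
   Context: Fix $d,h\in\mathbb{N}$, $|\Lambda^n|=(2n)^d$, $\|\cdot\|$ Euclidean norm. Strongly $r$-nearly additive (integer $r\ge0$): there exist $\mathbb{R}^h$-valued random variables $\{S^{n,z}\}_{n\in\mathbb{N},z\in\mathbb{Z}^d}$ with $\{S^{n,z}\}_{z\in\mathbb{Z}^d}$ independent copies of $S^n$ for each $n$, such that $\sup_{m\in\mathbb{N}}|\Lambda^{(2m+1)k}|^{-1}\|S^{(2m+1)k}-\sum_{z\in\mathbb{Z}^d\cap[-m,m]^d}S^{k-r,z}\|\to0$ almost surely as $k\to\infty$; strongly nearly additive = strongly $r$-nearly additive for some $r$. Strongly regular: for each fixed $k\in\mathbb{N}$, with $m_n$ the integer satisfying $(2m_n+1)k\le n<(2m_n+3)k$, $|\Lambda^n|^{-1}\|S^n-S^{(2m_n+1)k}\|\to0$ almost surely as $n\to\infty$. *)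

theory Defs
  imports "HOL-Probability.Probability"
begin

text \<open>Lattice dimension d is CARD('d); sites of Z^d are vectors of type int^'d.
  Values lie in R^h = real^'h with the Euclidean norm.\<close>

definition lam_vol :: "'d::finite itself \<Rightarrow> nat \<Rightarrow> real" where
  "lam_vol _ n = (2 * real n) ^ CARD('d)"

definition zbox :: "nat \<Rightarrow> (int^'d::finite) set" where
  "zbox m = {z. \<forall>i. \<bar>z $ i\<bar> \<le> int m}"

definition mblock :: "nat \<Rightarrow> nat \<Rightarrow> nat" where
  "mblock k n = (THE m. (2*m+1)*k \<le> n \<and> n < (2*m+3)*k)"

definition strongly_regular ::
  "'a measure \<Rightarrow> 'd::finite itself \<Rightarrow> (nat \<Rightarrow> 'a \<Rightarrow> real^'h::finite) \<Rightarrow> bool" where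
  "strongly_regular M D S \<longleftrightarrow>
     (\<forall>k::nat. k \<ge> 1 \<longrightarrow>
        (AE \<omega> in M. (\<lambda>n. norm (S n \<omega> - S ((2 * mblock k n + 1) * k) \<omega>) / lam_vol D n)
                      \<longlonglongrightarrow> 0))"

definition strongly_r_nearly_additive ::
  "'a measure \<Rightarrow> 'd::finite itself \<Rightarrow> (nat \<Rightarrow> 'a \<Rightarrow> real^'h::finite) \<Rightarrow> nat \<Rightarrow> bool" where
  "strongly_r_nearly_additive M D S r \<longleftrightarrow>
     (\<exists>Sc :: nat \<Rightarrow> int^'d \<Rightarrow> 'a \<Rightarrow> real^'h.
        (\<forall>n\<ge>1. (\<forall>z. Sc n z \<in> borel_measurable M \<and>
                     distr M borel (Sc n z) = distr M borel (S n))
               \<and> prob_space.indep_vars M (\<lambda>_. borel) (Sc n) UNIV) \<and>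
        (AE \<omega> in M.
           ((\<lambda>k. SUP m\<in>{1::nat..}.
                 ereal (norm (S ((2*m+1)*k) \<omega> - (\<Sum>z\<in>(zbox m :: (int^'d) set). Sc (k - r) z \<omega>))
                        / lam_vol D ((2*m+1)*k)))
            \<longlonglongrightarrow> 0)))"

definition strongly_nearly_additive ::
  "'a measure \<Rightarrow> 'd::finite itself \<Rightarrow> (nat \<Rightarrow> 'a \<Rightarrow> real^'h::finite) \<Rightarrow> bool" where
  "strongly_nearly_additive M D S \<longleftrightarrow> (\<exists>r. strongly_r_nearly_additive M D S r)"

end

theory Submission
  imports Defs
begin

definition tr :: "nat \<Rightarrow> real \<Rightarrow> real" where
  "tr i x = (if x \<le> real (Suc i) then x else 0)"

lemma tr_borel[measurable]: "tr i \<in> borel_measurable borel"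
  unfolding tr_def by measurable

lemma sum_ind_le:
  fixes y :: real assumes "0 \<le> y"
  shows "(\<Sum>i<n. if real (Suc i) < y then 1 else (0::real)) \<le> y"
proof -
  have "(\<Sum>i<n. if real (Suc i) < y then 1 else (0::real)) \<le> y \<and>
        (\<Sum>i<n. if real (Suc i) < y then 1 else (0::real)) \<le> real n"
  proof (induction n)
    case 0 then show ?case using assms by simp
  next
    case (Suc n) then show ?case by auto
  qed
  then show ?thesis by simp
qed

lemma tail_sum_sq:
  assumes "m \<le> K"
  shows "(\<Sum>i\<in>{m..<K}. 1 / (real (Suc i))^2) \<le> 2 / real (Suc m) - 2 / real (Suc K)"
  using assms
proof (induction K)
  case 0 then show ?case by simp
next
  case (Suc K)
  show ?case
  proof (cases "m = Suc K")
    case True then show ?thesis by simp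
  next
    case False
    then have mK: "m \<le> K" using Suc.prems by simp
    have step: "1 / (real (Suc K))^2 \<le> 2 / real (Suc K) - 2 / real (Suc (Suc K))"
    proof -
      have "2 / real (Suc K) - 2 / real (Suc (Suc K)) = 2 / (real (Suc K) * real (Suc (Suc K)))"
        by (simp add: field_simps)
      also have "1 / (real (Suc K))^2 \<le> \<dots>"
      proof -
        have "1 / (real (Suc K))^2 = 2 / (2 * (real (Suc K))^2)" by simp
        also have "\<dots> \<le> 2 / (real (Suc K) * real (Suc (Suc K)))"
          by (rule frac_le) (auto simp del: of_nat_Suc simp: power2_eq_square algebra_simps, simp)
        finally show ?thesis .
      qed
      finally show ?thesis by simp
    qed
    have "(\<Sum>i\<in>{m..<Suc K}. 1 / (real (Suc i))^2) = (\<Sum>i\<in>{m..<K}. 1 / (real (Suc i))^2) + 1 / (real (Suc K))^2"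
      using mK by simp
    also have "\<dots> \<le> 2 / real (Suc m) - 2 / real (Suc K) + (2 / real (Suc K) - 2 / real (Suc (Suc K)))"
      using Suc.IH[OF mK] step by linarith
    finally show ?thesis by simp
  qed
qed

lemma tr_sq_sum_le:
  fixes x :: real assumes x: "0 \<le> x"
  shows "(\<Sum>i<K. (tr i x)^2 / (real (Suc i))^2) \<le> 2 * x"
proof -
  define m where "m = nat (\<lceil>x\<rceil> - 1)"
  have m1: "x \<le> real (Suc m)" unfolding m_def using x by linarith
  have zero: "i < m \<Longrightarrow> tr i x = 0" for i
    unfolding tr_def m_def by (auto split: if_splits) linarith
  have "(\<Sum>i<K. (tr i x)^2 / (real (Suc i))^2) = (\<Sum>i\<in>{m..<K}. (tr i x)^2 / (real (Suc i))^2)"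
  proof (rule sum.mono_neutral_right)
    show "\<forall>i\<in>{..<K} - {m..<K}. (tr i x)\<^sup>2 / (real (Suc i))\<^sup>2 = 0" using zero by auto
  qed auto
  also have "\<dots> \<le> (\<Sum>i\<in>{m..<K}. x^2 * (1 / (real (Suc i))^2))"
  proof (rule sum_mono)
    fix i show "(tr i x)\<^sup>2 / (real (Suc i))\<^sup>2 \<le> x\<^sup>2 * (1 / (real (Suc i))\<^sup>2)"
      unfolding tr_def by (auto simp: field_simps)
  qed
  also have "\<dots> = x^2 * (\<Sum>i\<in>{m..<K}. 1 / (real (Suc i))^2)" by (simp add: sum_distrib_left)
  also have "\<dots> \<le> x^2 * (2 / real (Suc m))"
  proof (cases "m \<le> K")
    case True
    have "(\<Sum>i\<in>{m..<K}. 1 / (real (Suc i))^2) \<le> 2 / real (Suc m)"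
      using tail_sum_sq[OF True] by (smt (verit, best) of_nat_0_le_iff divide_nonneg_nonneg)
    then show ?thesis by (intro mult_left_mono) auto
  next
    case False then show ?thesis by simp
  qed
  also have "\<dots> \<le> 2 * x"
  proof -
    have "x^2 * (2 / real (Suc m)) = 2 * x * (x / real (Suc m))" by (simp add: power2_eq_square)
    also have "\<dots> \<le> 2 * x * 1" using m1 x by (intro mult_left_mono) auto
    finally show ?thesis by simp
  qed
  finally show ?thesis .
qed

definition kk :: "real \<Rightarrow> nat \<Rightarrow> nat" where
  "kk a n = nat \<lfloor>a ^ n\<rfloor>"

lemma kk_le: "1 \<le> a \<Longrightarrow> real (kk a n) \<le> a ^ n"
  unfolding kk_def by (simp add: of_nat_nat)  

lemma kk_gt: assumes "1 \<le> a" shows "a ^ n - 1 < real (kk a n)"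
proof -
  have "1 \<le> a ^ n" using assms by (rule one_le_power)
  then have "0 \<le> \<lfloor>a ^ n\<rfloor>" by simp
  then have "real (kk a n) = real_of_int \<lfloor>a ^ n\<rfloor>" unfolding kk_def by simp
  moreover have "a ^ n < real_of_int \<lfloor>a ^ n\<rfloor> + 1" by (rule real_of_int_floor_add_one_gt)
  ultimately show ?thesis by linarith
qed

lemma kk_ge1: "1 \<le> a \<Longrightarrow> 1 \<le> kk a n"
  unfolding kk_def using one_le_power[of a n] by (simp add: le_nat_iff)

lemma kk_half: "1 \<le> a \<Longrightarrow> a ^ n < 2 * real (kk a n)"
  using kk_gt[of a n] kk_ge1[of a n] by linarith

lemma kk_mono: "1 \<le> a \<Longrightarrow> n \<le> n' \<Longrightarrow> kk a n \<le> kk a n'"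
  unfolding kk_def by (intro nat_mono floor_mono power_increasing) auto

lemma kk_unbounded: assumes "1 < a" shows "\<exists>n. m < kk a n"
proof -
  obtain n where "real m + 1 < a ^ n" using real_arch_pow[OF assms] by blast
  then have "real m < real (kk a n)" using kk_gt[of a n] assms by linarith
  then show ?thesis by (intro exI[of _ n]) simp
qed



lemma kk_filterlim: assumes "1 < a" shows "filterlim (kk a) at_top sequentially"
  unfolding filterlim_at_top
proof (intro allI)
  fix Z :: nat
  obtain n where "Z < kk a n" using kk_unbounded[OF assms] by blast
  then show "eventually (\<lambda>x. Z \<le> kk a x) sequentially"
    unfolding eventually_sequentially
  proof (intro exI[of _ n] allI impI)
    fix x assume "n \<le> x"
    then have "kk a n \<le> kk a x" using kk_mono[of a n x] assms by simp
    then show "Z \<le> kk a x" using \<open>Z < kk a n\<close> by simp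
  qed
qed

lemma kk_ratio: assumes a: "1 < a"
  shows "eventually (\<lambda>n. real (kk a (Suc n)) \<le> a^2 * real (kk a n)) sequentially"
proof -
  obtain n0 where n0: "a / (a - 1) < a ^ n0" using real_arch_pow[OF a] by blast
  show ?thesis unfolding eventually_sequentially
  proof (intro exI[of _ n0] allI impI)
    fix n assume "n0 \<le> n"
    then have "a ^ n0 \<le> a ^ n" using a by (intro power_increasing) auto
    then have h: "a / (a - 1) \<le> a ^ n" using n0 by linarith
    have "a \<le> a ^ n * (a - 1)" using h a by (simp add: divide_le_eq)
    then have h2: "a * a \<le> a * (a ^ n * (a - 1))" using a by (intro mult_left_mono) auto
    have "real (kk a (Suc n)) \<le> a ^ Suc n" using kk_le[of a "Suc n"] a by simp
    also have "\<dots> \<le> a^2 * (a ^ n - 1)" using h2 by (simp add: power2_eq_square algebra_simps)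
    also have "\<dots> \<le> a^2 * real (kk a n)" using kk_gt[of a n] a
      by (intro mult_left_mono) auto
    finally show "real (kk a (Suc n)) \<le> a^2 * real (kk a n)" .
  qed
qed

lemma geo_tail:
  fixes b :: real assumes "b < 1" "n0 \<le> N"
  shows "(\<Sum>n\<in>{n0..<N}. b ^ n) = (b ^ n0 - b ^ N) / (1 - b)"
  using assms(2)
proof (induction N)
  case 0 then show ?case by simp
next
  case (Suc N)
  show ?case
  proof (cases "n0 = Suc N")
    case True then show ?thesis by simp
  next
    case False
    then have "n0 \<le> N" using Suc.prems by simp
    then have "(\<Sum>n\<in>{n0..<Suc N}. b ^ n) = (b ^ n0 - b ^ N) / (1 - b) + b ^ N"
      using Suc.IH by simp
    also have "\<dots> = (b ^ n0 - b ^ Suc N) / (1 - b)" using assms(1)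
      by (simp add: field_simps)
    finally show ?thesis .
  qed
qed

lemma kk_sum_bound:
  assumes a: "1 < a"
  shows "(\<Sum>n<N. if i < kk a n then 1 / (real (kk a n))^2 else 0) \<le> (4 / (1 - 1 / a^2)) / (real (Suc i))^2"
proof -
  define b where "b = 1 / a^2"
  have b: "0 < b" "b < 1" unfolding b_def using a by (auto simp: power_one_over)
  have ex: "\<exists>n. real (Suc i) \<le> a ^ n" using real_arch_pow[OF a, of "real (Suc i)"] by (auto intro: less_imp_le)
  define n0 where "n0 = (LEAST n. real (Suc i) \<le> a ^ n)"
  have n0: "real (Suc i) \<le> a ^ n0" unfolding n0_def by (rule LeastI_ex[OF ex])
  have zero: "\<not> (i < kk a n)" if "n < n0" for n
  proof
    assume "i < kk a n"
    then have "real (Suc i) \<le> a ^ n" using kk_le[of a n] a by linarith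
    then show False using that not_less_Least unfolding n0_def by blast
  qed
  have trm: "(if i < kk a n then 1 / (real (kk a n))^2 else 0) \<le> (if n0 \<le> n then 4 * b ^ n else 0)" for n
  proof (cases "i < kk a n")
    case True
    then have "n0 \<le> n" using zero[of n] by (meson not_le)
    have pos: "0 < a ^ n" using a by simp
    have "a ^ n / 2 < real (kk a n)" using kk_half[of a n] a by simp
    then have "(a ^ n / 2)^2 \<le> (real (kk a n))^2" using pos by (intro power_mono) auto
    moreover have "0 < (a ^ n / 2)^2" by (intro zero_less_power) (use pos in simp)
    moreover have "0 < (real (kk a n))^2" using kk_ge1[of a n] a by simp
    ultimately have "1 / (real (kk a n))^2 \<le> 1 / (a ^ n / 2)^2"
      by (intro divide_left_mono) (auto intro: mult_pos_pos)
    also have "\<dots> = 4 * b ^ n" unfolding b_def using pos a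
      by (simp add: power_divide power_one_over flip: power_mult)
    finally show ?thesis using True \<open>n0 \<le> n\<close> by simp
  qed (use b in auto)
  have "(\<Sum>n<N. if i < kk a n then 1 / (real (kk a n))^2 else 0) \<le> (\<Sum>n<N. if n0 \<le> n then 4 * b ^ n else 0)"
    by (intro sum_mono trm)
  also have "\<dots> \<le> 4 * b ^ n0 / (1 - b)"
  proof (cases "n0 \<le> N")
    case True
    have "(\<Sum>n<N. if n0 \<le> n then 4 * b ^ n else 0) = (\<Sum>n\<in>{n0..<N}. 4 * b ^ n)"
      by (rule sum.mono_neutral_cong_right) auto
    also have "\<dots> = 4 * ((b ^ n0 - b ^ N) / (1 - b))" by (simp add: sum_distrib_left[symmetric] geo_tail[OF b(2) True])
    also have "\<dots> \<le> 4 * (b ^ n0 / (1 - b))" using b by (intro mult_left_mono divide_right_mono) auto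
    finally show ?thesis by simp
  next
    case False
    then have "(\<Sum>n<N. if n0 \<le> n then 4 * b ^ n else 0) = 0" by (intro sum.neutral) auto
    then show ?thesis using b by simp
  qed
  also have "\<dots> \<le> (4 / (1 - 1 / a^2)) / (real (Suc i))^2"
  proof -
    have "b ^ n0 = 1 / (a ^ n0)^2" unfolding b_def by (simp add: power_one_over mult.commute flip: power_mult)
    also have "\<dots> \<le> 1 / (real (Suc i))^2"
    proof -
      have p: "0 < real (Suc i)" by simp
      have "0 < (a ^ n0)^2 * (real (Suc i))^2" using n0 p a by (intro mult_pos_pos) auto
      then show ?thesis using n0 p by (intro divide_left_mono power_mono) auto
    qed
    finally have "4 * b ^ n0 / (1 - b) \<le> 4 * (1 / (real (Suc i))^2) / (1 - b)" using b
      by (intro divide_right_mono mult_left_mono) auto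
    then show ?thesis unfolding b_def by (simp add: mult.commute)
  qed
  finally show ?thesis .
qed

lemma cesaro0:
  fixes b :: "nat \<Rightarrow> real" assumes "b \<longlonglongrightarrow> 0"
  shows "(\<lambda>n. (\<Sum>i<n. b i) / real n) \<longlonglongrightarrow> 0"
proof (rule LIMSEQ_I)
  fix e :: real assume e: "0 < e"
  obtain N where N: "\<And>n. n \<ge> N \<Longrightarrow> norm (b n) < e/2"
    using LIMSEQ_D[OF assms, of "e/2"] e by auto
  define C where "C = (\<Sum>i<N. norm (b i))"
  obtain N2 :: nat where N2: "2 * C / e < real N2" using reals_Archimedean2 by blast
  show "\<exists>no. \<forall>n\<ge>no. norm ((\<Sum>i<n. b i) / real n - 0) < e"
  proof (intro exI[of _ "Suc (max N N2)"] allI impI)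
    fix n assume n: "Suc (max N N2) \<le> n"
    then have nN: "N \<le> n" and npos: "0 < real n" by auto
    have "norm (\<Sum>i<n. b i) \<le> (\<Sum>i<n. norm (b i))" by (rule norm_sum)
    also have "\<dots> = C + (\<Sum>i\<in>{N..<n}. norm (b i))"
      unfolding C_def using nN by (metis atLeast0LessThan sum.atLeastLessThan_concat zero_le)
    also have "(\<Sum>i\<in>{N..<n}. norm (b i)) \<le> (\<Sum>i\<in>{N..<n}. e/2)"
      using N by (intro sum_mono) (auto intro: less_imp_le)
    also have "\<dots> \<le> real n * (e/2)" using nN e by simp
    finally have h1: "norm (\<Sum>i<n. b i) \<le> C + real n * (e/2)" by simp
    have "2 * C / e < real n" using N2 n by linarith
    then have "C < real n * (e/2)" using e by (simp add: field_simps)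
    with h1 have "norm (\<Sum>i<n. b i) < real n * e" by linarith
    then show "norm ((\<Sum>i<n. b i) / real n - 0) < e"
      using npos by (simp add: field_simps)
  qed
qed

lemma cesaro:
  fixes b :: "nat \<Rightarrow> real" assumes "b \<longlonglongrightarrow> L"
  shows "(\<lambda>n. (\<Sum>i<n. b i) / real n) \<longlonglongrightarrow> L"
proof -
  have "(\<lambda>n. b n - L) \<longlonglongrightarrow> 0" using assms by (simp add: LIM_zero)
  then have "(\<lambda>n. (\<Sum>i<n. b i - L) / real n) \<longlonglongrightarrow> 0" by (rule cesaro0)
  then have "(\<lambda>n. (\<Sum>i<n. b i - L) / real n + L) \<longlonglongrightarrow> 0 + L" by (intro tendsto_add) auto
  moreover have "eventually (\<lambda>n. (\<Sum>i<n. b i - L) / real n + L = (\<Sum>i<n. b i) / real n) sequentially"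
    unfolding eventually_sequentially
    by (intro exI[of _ 1] allI impI) (auto simp: sum_subtractf field_simps)
  ultimately show ?thesis by (simp add: tendsto_cong)
qed

lemma interp_one:
  fixes T :: "nat \<Rightarrow> real" and \<mu> a \<eta> :: real
  assumes mono: "\<And>m m'. m \<le> m' \<Longrightarrow> T m \<le> T m'" and nn: "\<And>m. 0 \<le> T m"
    and a: "1 < a" and eta: "0 < \<eta>"
    and lim: "(\<lambda>n. T (kk a n) / real (kk a n)) \<longlonglongrightarrow> \<mu>"
  shows "eventually (\<lambda>m. \<bar>T m / real m - \<mu>\<bar> \<le> (a^2 - 1) * \<mu> + a^2 * \<eta>) sequentially"
proof -
  have mu: "0 \<le> \<mu>"
    by (rule LIMSEQ_le_const[OF lim]) (auto intro!: divide_nonneg_nonneg nn)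
  obtain N1 where N1: "\<And>n. n \<ge> N1 \<Longrightarrow> \<bar>T (kk a n) / real (kk a n) - \<mu>\<bar> < \<eta>"
    using LIMSEQ_D[OF lim eta] by (auto simp: dist_real_def)
  obtain N2 where N2: "\<And>n. n \<ge> N2 \<Longrightarrow> real (kk a (Suc n)) \<le> a^2 * real (kk a n)"
    using kk_ratio[OF a] unfolding eventually_sequentially by auto
  define N where "N = max N1 N2"
  show ?thesis unfolding eventually_sequentially
  proof (intro exI[of _ "kk a N"] allI impI)
    fix m assume m: "kk a N \<le> m"
    obtain n1 where n1: "m < kk a n1" using kk_unbounded[OF a] by blast
    define Sn where "Sn = {n. kk a n \<le> m}"
    have Sfin: "finite Sn"
    proof -
      have "Sn \<subseteq> {..<n1}"
      proof
        fix n assume "n \<in> Sn"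
        then have "kk a n \<le> m" by (simp add: Sn_def)
        then show "n \<in> {..<n1}" using kk_mono[of a n1 n] a n1 by (cases "n1 \<le> n") auto
      qed
      then show ?thesis by (rule finite_subset) auto
    qed
    have NS: "N \<in> Sn" using m by (simp add: Sn_def)
    define n where "n = Max Sn"
    have nS: "n \<in> Sn" unfolding n_def using Sfin NS by (intro Max_in) auto
    have nN: "N \<le> n" unfolding n_def using Sfin NS by (intro Max_ge)
    have kn: "kk a n \<le> m" using nS by (simp add: Sn_def)
    have kn1: "m < kk a (Suc n)"
    proof (rule ccontr)
      assume "\<not> m < kk a (Suc n)"
      then have "Suc n \<in> Sn" by (simp add: Sn_def)
      then have "Suc n \<le> n" unfolding n_def using Sfin by (intro Max_ge)
      then show False by simp
    qed
    define k where "k = real (kk a n)"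
    define k' where "k' = real (kk a (Suc n))"
    have k1: "1 \<le> k" unfolding k_def using kk_ge1[of a n] a by simp
    have kk': "k' \<le> a^2 * k" unfolding k_def k'_def using N2 nN N_def by auto
    have kmk: "k \<le> real m" "real m < k'" unfolding k_def k'_def using kn kn1 by auto
    have e1: "\<bar>T (kk a n) / k - \<mu>\<bar> < \<eta>" unfolding k_def using N1 nN N_def by auto
    have e2: "\<bar>T (kk a (Suc n)) / k' - \<mu>\<bar> < \<eta>" unfolding k'_def using N1 nN N_def by auto
    have Tm1: "T (kk a n) \<le> T m" using kn mono by simp
    have Tm2: "T m \<le> T (kk a (Suc n))" using kn1 mono by simp
    have mpos: "0 < real m" using k1 kmk by linarith
    have a2: "1 < a^2" using a by (simp add: one_less_power)
    have up: "T m / real m \<le> (\<mu> + \<eta>) * a^2"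
    proof -
      have "T m / real m \<le> T (kk a (Suc n)) / k"
        using Tm2 kmk k1 nn by (intro frac_le) auto
      also have "\<dots> = (T (kk a (Suc n)) / k') * (k' / k)" using k1 kmk by (simp add: field_simps)
      also have "\<dots> \<le> (\<mu> + \<eta>) * a^2"
      proof (intro mult_mono)
        show "T (kk a (Suc n)) / k' \<le> \<mu> + \<eta>" using e2 by linarith
        show "k' / k \<le> a^2" using kk' k1 by (simp add: field_simps)
      qed (use mu eta k1 kmk in auto)
      finally show ?thesis .
    qed
    have low: "(\<mu> - \<eta>) / a^2 \<le> T m / real m"
    proof -
      have "(\<mu> - \<eta>) / a^2 \<le> (T (kk a n) / k) / a^2"
        using e1 a2 by (intro divide_right_mono) auto
      also have "\<dots> = (T (kk a n) / k) * (1 / a^2)" by simp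
      also have "\<dots> \<le> (T (kk a n) / k) * (k / k')"
      proof (intro mult_left_mono)
        have "k' > 0" "a^2 > 0" using k1 kmk a2 by auto
        then show "1 / a^2 \<le> k / k'" using kk' by (simp add: field_simps)
        show "0 \<le> T (kk a n) / k" using nn k1 by simp
      qed
      also have "\<dots> = T (kk a n) / k'" using k1 by simp
      also have "\<dots> \<le> T m / real m"
        using Tm1 kmk nn mpos by (intro frac_le) auto
      finally show ?thesis .
    qed
    have i1: "1 - 1 / a^2 \<le> a^2 - 1"
    proof -
      have "a^2 + 1/a^2 - 2 = (a - 1/a)^2" using a by (simp add: power2_eq_square field_simps)
      then have "0 \<le> a^2 + 1/a^2 - 2" by simp
      then show ?thesis by linarith
    qed
    have i2: "1 / a^2 \<le> a^2"
    proof -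
      have "1 / a^2 \<le> 1" using a2 by (subst divide_le_eq_1) auto
      then show ?thesis using a2 by linarith
    qed
    have "T m / real m - \<mu> \<le> (a^2 - 1) * \<mu> + a^2 * \<eta>" using up by (simp add: algebra_simps)
    moreover have "\<mu> - T m / real m \<le> (a^2 - 1) * \<mu> + a^2 * \<eta>"
    proof -
      have "\<mu> - T m / real m \<le> \<mu> - (\<mu> - \<eta>) / a^2" using low by linarith
      also have "\<dots> = (1 - 1/a^2) * \<mu> + (1/a^2) * \<eta>" by (simp add: algebra_simps diff_divide_distrib)
      also have "\<dots> \<le> (a^2 - 1) * \<mu> + a^2 * \<eta>"
        using i1 i2 mu eta by (intro add_mono mult_right_mono) auto
      finally show ?thesis .
    qed
    ultimately show "\<bar>T m / real m - \<mu>\<bar> \<le> (a^2 - 1) * \<mu> + a^2 * \<eta>" by linarith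
  qed
qed

lemma interp:
  fixes T :: "nat \<Rightarrow> real" and \<mu> :: real
  assumes mono: "\<And>m m'. m \<le> m' \<Longrightarrow> T m \<le> T m'" and nn: "\<And>m. 0 \<le> T m"
    and lim: "\<And>j. (\<lambda>n. T (kk (1 + 1 / real (Suc j)) n) / real (kk (1 + 1 / real (Suc j)) n)) \<longlonglongrightarrow> \<mu>"
  shows "(\<lambda>m. T m / real m) \<longlonglongrightarrow> \<mu>"
proof (rule LIMSEQ_I)
  fix e :: real assume e: "0 < e"
  define \<delta> where "\<delta> j = ((1 + 1 / real (Suc j))^2 - 1) * \<mu> + (1 + 1 / real (Suc j))^2 * (1 / real (Suc j))" for j
  have "(\<lambda>j. 1 / real (Suc j)) \<longlonglongrightarrow> 0" by (rule LIMSEQ_Suc[OF lim_inverse_n'])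
  then have "\<delta> \<longlonglongrightarrow> ((1 + 0)^2 - 1) * \<mu> + (1 + 0)^2 * 0"
    unfolding \<delta>_def by (intro tendsto_intros)
  then have "\<delta> \<longlonglongrightarrow> 0" by simp
  then obtain no where "\<forall>n\<ge>no. norm (\<delta> n - 0) < e" using LIMSEQ_D[of \<delta> 0 e] e by blast
  then have "\<delta> no < e" by auto
  then obtain j where j: "\<delta> j < e" by blast
  have a: "1 < 1 + 1 / real (Suc j)" by simp
  have "eventually (\<lambda>m. \<bar>T m / real m - \<mu>\<bar> \<le> \<delta> j) sequentially"
    unfolding \<delta>_def by (rule interp_one[OF mono nn a _ lim]) auto
  then obtain M where "\<And>m. m \<ge> M \<Longrightarrow> \<bar>T m / real m - \<mu>\<bar> \<le> \<delta> j"
    unfolding eventually_sequentially by auto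
  then show "\<exists>no. \<forall>n\<ge>no. norm (T n / real n - \<mu>) < e" using j by force
qed

context prob_space begin

lemma same_distr_integral:
  fixes X Y :: "'a \<Rightarrow> real" and g :: "real \<Rightarrow> real"
  assumes d: "distr M borel X = distr M borel Y"
    and [measurable]: "X \<in> borel_measurable M" "Y \<in> borel_measurable M" "g \<in> borel_measurable borel"
  shows "expectation (\<lambda>\<omega>. g (X \<omega>)) = expectation (\<lambda>\<omega>. g (Y \<omega>))"
  using integral_distr[of X M borel g] integral_distr[of Y M borel g] d by simp

lemma same_distr_integrable:
  fixes X Y :: "'a \<Rightarrow> real" and g :: "real \<Rightarrow> real"
  assumes d: "distr M borel X = distr M borel Y"
    and [measurable]: "X \<in> borel_measurable M" "Y \<in> borel_measurable M" "g \<in> borel_measurable borel"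
  shows "integrable M (\<lambda>\<omega>. g (X \<omega>)) \<longleftrightarrow> integrable M (\<lambda>\<omega>. g (Y \<omega>))"
  using integrable_distr_eq[of X M borel g] integrable_distr_eq[of Y M borel g] d by simp

lemma same_distr_prob:
  fixes X Y :: "'a \<Rightarrow> real"
  assumes d: "distr M borel X = distr M borel Y"
    and [measurable]: "X \<in> borel_measurable M" "Y \<in> borel_measurable M" and A: "A \<in> sets borel"
  shows "prob {\<omega>\<in>space M. X \<omega> \<in> A} = prob {\<omega>\<in>space M. Y \<omega> \<in> A}"
proof -
  have "prob {\<omega>\<in>space M. X \<omega> \<in> A} = measure (distr M borel X) A"
    using A by (subst measure_distr) (auto intro: arg_cong[where f="measure M"])
  also have "\<dots> = measure (distr M borel Y) A" using d by simp
  also have "\<dots> = prob {\<omega>\<in>space M. Y \<omega> \<in> A}"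
    using A by (subst measure_distr) (auto intro: arg_cong[where f="measure M"])
  finally show ?thesis .
qed

end

locale slln_nn = prob_space +
  fixes X :: "nat \<Rightarrow> 'a \<Rightarrow> real" and Y :: "'a \<Rightarrow> real"
  assumes measX[measurable]: "\<And>i. X i \<in> borel_measurable M"
    and measY[measurable]: "Y \<in> borel_measurable M"
    and indX: "\<And>i j. i \<noteq> j \<Longrightarrow> indep_var borel (X i) borel (X j)"
    and distX: "\<And>i. distr M borel (X i) = distr M borel Y"
    and intY: "integrable M Y"
    and nnX: "\<And>i \<omega>. 0 \<le> X i \<omega>" and nnY: "\<And>\<omega>. 0 \<le> Y \<omega>"
begin

definition "Yt i \<omega> = tr i (X i \<omega>)"
definition "T n \<omega> = (\<Sum>i<n. Yt i \<omega>)"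

lemma Yt_meas[measurable]: "Yt i \<in> borel_measurable M"
  unfolding Yt_def by measurable

lemma T_meas[measurable]: "T n \<in> borel_measurable M"
  unfolding T_def by measurable

lemma Yt_bounds: "0 \<le> Yt i \<omega>" "Yt i \<omega> \<le> real (Suc i)"
  unfolding Yt_def tr_def using nnX[of i \<omega>] by auto

lemma Yt_int: "integrable M (Yt i)"
proof (rule integrable_const_bound[where B="real (Suc i)"])
  show "AE x in M. norm (Yt i x) \<le> real (Suc i)"
    by (intro AE_I2) (metis Yt_bounds abs_of_nonneg real_norm_def)
qed auto

lemma Yt2_int: "integrable M (\<lambda>\<omega>. (Yt i \<omega>)^2)"
proof (rule integrable_const_bound[where B="(real (Suc i))^2"])
  show "AE x in M. norm ((Yt i x)^2) \<le> (real (Suc i))^2"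
  proof (intro AE_I2)
    fix x
    have "(Yt i x)^2 \<le> (real (Suc i))^2" using Yt_bounds[of i x] by (intro power_mono) auto
    then show "norm ((Yt i x)^2) \<le> (real (Suc i))^2" by simp
  qed
qed auto

lemma T_int: "integrable M (T n)"
  unfolding T_def using Yt_int by auto

lemma E_Yt: "expectation (Yt i) = expectation (\<lambda>\<omega>. tr i (Y \<omega>))"
  unfolding Yt_def by (rule same_distr_integral[OF distX]) auto

lemma E_Yt2: "expectation (\<lambda>\<omega>. (Yt i \<omega>)^2) = expectation (\<lambda>\<omega>. (tr i (Y \<omega>))^2)"
  unfolding Yt_def by (rule same_distr_integral[OF distX, where g="\<lambda>x. (tr i x)^2"]) auto

lemma trY_int: "integrable M (\<lambda>\<omega>. tr i (Y \<omega>))"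
  by (rule Bochner_Integration.integrable_bound[OF intY]) (auto simp: tr_def)

lemma trY2_int: "integrable M (\<lambda>\<omega>. (tr i (Y \<omega>))^2)"
  using Yt2_int[of i] unfolding Yt_def
  by (subst (asm) same_distr_integrable[OF distX, where g="\<lambda>x. (tr i x)^2"]) auto

lemma step1: "AE \<omega> in M. eventually (\<lambda>i. X i \<omega> = Yt i \<omega>) sequentially"
proof -
  define A where "A i = {\<omega>\<in>space M. real (Suc i) < X i \<omega>}" for i
  define B where "B i = {\<omega>\<in>space M. real (Suc i) < Y \<omega>}" for i
  have A_sets[measurable]: "A i \<in> sets M" for i unfolding A_def by measurable
  have B_sets[measurable]: "B i \<in> sets M" for i unfolding B_def by measurable
  have AB: "measure M (A i) = measure M (B i)" for i
  proof -
    have "prob {\<omega>\<in>space M. X i \<omega> \<in> {real (Suc i)<..}} = prob {\<omega>\<in>space M. Y \<omega> \<in> {real (Suc i)<..}}"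
      by (rule same_distr_prob[OF distX]) auto
    then show ?thesis unfolding A_def B_def by simp
  qed
  have "summable (\<lambda>i. measure M (A i))"
  proof (rule summableI_nonneg_bounded)
    fix n
    have "(\<Sum>i<n. measure M (A i)) = (\<Sum>i<n. expectation (indicator (B i)))"
      using AB by (simp add: Int_absorb2 sets.sets_into_space)
    also have "\<dots> = expectation (\<lambda>\<omega>. \<Sum>i<n. indicator (B i) \<omega>)"
      by (rule Bochner_Integration.integral_sum[symmetric])
         (auto intro!: integrable_real_indicator simp: emeasure_finite less_top[symmetric])
    also have "\<dots> \<le> expectation Y"
    proof (rule integral_mono)
      fix \<omega> assume "\<omega> \<in> space M"
      then have "(\<Sum>i<n. indicator (B i) \<omega>) = (\<Sum>i<n. if real (Suc i) < Y \<omega> then 1 else (0::real))"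
        unfolding B_def by (intro sum.cong) auto
      also have "\<dots> \<le> Y \<omega>" by (rule sum_ind_le[OF nnY])
      finally show "(\<Sum>i<n. indicator (B i) \<omega>) \<le> Y \<omega>" .
    qed (auto intro!: intY integrable_sum integrable_real_indicator simp: emeasure_finite less_top[symmetric])
    finally show "(\<Sum>i<n. measure M (A i)) \<le> expectation Y" .
  qed auto
  then have "AE \<omega> in M. eventually (\<lambda>i. \<omega> \<in> space M - A i) sequentially"
    by (intro borel_cantelli_AE1) (auto simp: emeasure_finite less_top[symmetric])
  then show ?thesis
  proof (rule AE_mp, intro AE_I2 impI)
    fix \<omega> assume "\<omega> \<in> space M" and ev: "eventually (\<lambda>i. \<omega> \<in> space M - A i) sequentially"
    show "eventually (\<lambda>i. X i \<omega> = Yt i \<omega>) sequentially"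
      using ev by (rule eventually_mono) (auto simp: A_def Yt_def tr_def \<open>\<omega> \<in> space M\<close>)
  qed
qed

lemma step2: "AE \<omega> in M. (\<lambda>n. ((\<Sum>i<n. X i \<omega>) - T n \<omega>) / real n) \<longlonglongrightarrow> 0"
  using step1
proof (rule AE_mp, intro AE_I2 impI)
  fix \<omega> assume "eventually (\<lambda>i. X i \<omega> = Yt i \<omega>) sequentially"
  then obtain N where N: "\<And>i. i \<ge> N \<Longrightarrow> X i \<omega> = Yt i \<omega>" unfolding eventually_sequentially by auto
  define c where "c = (\<Sum>i<N. X i \<omega> - Yt i \<omega>)"
  have ev: "eventually (\<lambda>n. ((\<Sum>i<n. X i \<omega>) - T n \<omega>) / real n = c / real n) sequentially"
    unfolding eventually_sequentially
  proof (intro exI[of _ N] allI impI)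
    fix n assume n: "N \<le> n"
    have "(\<Sum>i<n. X i \<omega>) - T n \<omega> = (\<Sum>i<n. X i \<omega> - Yt i \<omega>)" unfolding T_def by (simp add: sum_subtractf)
    also have "\<dots> = c" unfolding c_def
      by (rule sum.mono_neutral_right) (use n N in auto)
    finally show "((\<Sum>i<n. X i \<omega>) - T n \<omega>) / real n = c / real n" by simp
  qed
  have lim: "(\<lambda>n. c / real n) \<longlonglongrightarrow> 0" by (rule lim_const_over_n)
  show "(\<lambda>n. ((\<Sum>i<n. X i \<omega>) - T n \<omega>) / real n) \<longlonglongrightarrow> 0"
    using iffD2[OF tendsto_cong[OF ev] lim] .
qed

lemma step3: "(\<lambda>n. expectation (T n) / real n) \<longlonglongrightarrow> expectation Y"
proof -
  have "(\<lambda>i. expectation (\<lambda>\<omega>. tr i (Y \<omega>))) \<longlonglongrightarrow> expectation Y"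
  proof (rule integral_dominated_convergence[where w="\<lambda>\<omega>. Y \<omega>"])
    show "AE x in M. (\<lambda>i. tr i (Y x)) \<longlonglongrightarrow> Y x"
    proof (intro AE_I2 tendsto_eventually)
      fix x
      obtain N :: nat where "Y x \<le> real N" using real_arch_simple by blast
      then show "eventually (\<lambda>i. tr i (Y x) = Y x) sequentially"
        unfolding eventually_sequentially tr_def by (intro exI[of _ N]) auto
    qed
    show "AE x in M. norm (tr i (Y x)) \<le> Y x" for i using nnY by (auto simp: tr_def)
  qed (auto intro: intY)
  then have "(\<lambda>n. (\<Sum>i<n. expectation (\<lambda>\<omega>. tr i (Y \<omega>))) / real n) \<longlonglongrightarrow> expectation Y"
    by (rule cesaro)
  moreover have "expectation (T n) = (\<Sum>i<n. expectation (\<lambda>\<omega>. tr i (Y \<omega>)))" for n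
    unfolding T_def by (subst Bochner_Integration.integral_sum) (auto intro: Yt_int simp: E_Yt)
  ultimately show ?thesis by simp
qed

end

context slln_nn begin

lemma Yt_le': "Yt i \<omega> \<le> 1 + real i" using Yt_bounds(2)[of i \<omega>] by simp

lemma T_bounds: "0 \<le> T n \<omega>" "T n \<omega> \<le> real n * real n"
proof -
  show "0 \<le> T n \<omega>" unfolding T_def using Yt_bounds by (intro sum_nonneg) auto
  have "T n \<omega> \<le> real (card {..<n}) * real n" unfolding T_def
  proof (rule sum_bounded_above)
    fix i assume "i \<in> {..<n}"
    then show "Yt i \<omega> \<le> real n" using Yt_bounds(2)[of i \<omega>] by simp
  qed
  then show "T n \<omega> \<le> real n * real n" by simp
qed

lemma T2_int: "integrable M (\<lambda>\<omega>. (T n \<omega>)^2)"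
proof (rule integrable_const_bound[where B="(real n * real n)^2"])
  show "AE x in M. norm ((T n x)^2) \<le> (real n * real n)^2"
  proof (intro AE_I2)
    fix x
    have "(T n x)^2 \<le> (real n * real n)^2" using T_bounds[of n x] by (intro power_mono) auto
    then show "norm ((T n x)^2) \<le> (real n * real n)^2" by simp
  qed
qed auto

lemma step4: "expectation (\<lambda>\<omega>. (T n \<omega> - expectation (T n))^2) \<le> (\<Sum>i<n. expectation (\<lambda>\<omega>. (tr i (Y \<omega>))^2))"
proof -
  define c where "c i = expectation (Yt i)" for i
  define Z where "Z i \<omega> = Yt i \<omega> - c i" for i \<omega>
  have Zmeas[measurable]: "Z i \<in> borel_measurable M" for i unfolding Z_def by measurable
  have cb: "0 \<le> c i" "c i \<le> real (Suc i)" for i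
  proof -
    show "0 \<le> c i" unfolding c_def using Yt_bounds by (intro Bochner_Integration.integral_nonneg) auto
    have "c i \<le> expectation (\<lambda>\<omega>. real (Suc i))" unfolding c_def
      by (rule integral_mono) (auto intro: Yt_int Yt_le')
    then show "c i \<le> real (Suc i)" by (simp add: prob_space)
  qed
  have Zb: "\<bar>Z i \<omega>\<bar> \<le> real (Suc i)" for i \<omega>
    using Yt_bounds[of i \<omega>] cb[of i] unfolding Z_def by linarith
  have ZZint: "integrable M (\<lambda>\<omega>. Z i \<omega> * Z j \<omega>)" for i j
  proof (rule integrable_const_bound[where B="real (Suc i) * real (Suc j)"])
    show "AE x in M. norm (Z i x * Z j x) \<le> real (Suc i) * real (Suc j)"
      using Zb by (intro AE_I2) (simp add: abs_mult mult_mono)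
  qed auto
  have Zint: "integrable M (Z i)" for i
    unfolding Z_def using Yt_int by auto
  have EZ: "expectation (Z i) = 0" for i
    unfolding Z_def c_def using Yt_int[of i] by (simp add: prob_space)
  have cross: "expectation (\<lambda>\<omega>. Z i \<omega> * Z j \<omega>) = 0" if ij: "i \<noteq> j" for i j
  proof -
    have "indep_var borel ((\<lambda>x. tr i x - c i) \<circ> X i) borel ((\<lambda>x. tr j x - c j) \<circ> X j)"
      by (rule indep_var_compose[OF indX[OF ij]]) auto
    moreover have "(\<lambda>x. tr i x - c i) \<circ> X i = Z i" "(\<lambda>x. tr j x - c j) \<circ> X j = Z j"
      by (auto simp: Z_def Yt_def)
    ultimately have ind: "indep_var borel (Z i) borel (Z j)" by simp
    show ?thesis using indep_var_lebesgue_integral[OF ind Zint Zint] EZ by simp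
  qed
  have ET: "expectation (T n) = (\<Sum>i<n. c i)"
    unfolding T_def c_def by (rule Bochner_Integration.integral_sum) (rule Yt_int)
  have sumZ: "T n \<omega> - expectation (T n) = (\<Sum>i<n. Z i \<omega>)" for \<omega>
    unfolding ET T_def Z_def by (simp add: sum_subtractf)
  have "expectation (\<lambda>\<omega>. (T n \<omega> - expectation (T n))^2) = expectation (\<lambda>\<omega>. \<Sum>i<n. \<Sum>j<n. Z i \<omega> * Z j \<omega>)"
    unfolding sumZ by (simp add: power2_eq_square sum_product)
  also have "\<dots> = (\<Sum>i<n. \<Sum>j<n. expectation (\<lambda>\<omega>. Z i \<omega> * Z j \<omega>))"
    using ZZint by (simp add: Bochner_Integration.integral_sum integrable_sum)
  also have "\<dots> = (\<Sum>i<n. expectation (\<lambda>\<omega>. Z i \<omega> * Z i \<omega>))"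
  proof (rule sum.cong[OF refl])
    fix i assume i: "i \<in> {..<n}"
    show "(\<Sum>j<n. expectation (\<lambda>\<omega>. Z i \<omega> * Z j \<omega>)) = expectation (\<lambda>\<omega>. Z i \<omega> * Z i \<omega>)"
      by (subst sum.remove[OF _ i]) (auto intro!: sum.neutral cross)
  qed
  also have "\<dots> \<le> (\<Sum>i<n. expectation (\<lambda>\<omega>. (tr i (Y \<omega>))^2))"
  proof (rule sum_mono)
    fix i
    have "expectation (\<lambda>\<omega>. Z i \<omega> * Z i \<omega>) = expectation (\<lambda>\<omega>. (Yt i \<omega> - expectation (Yt i))^2)"
      unfolding Z_def c_def by (simp add: power2_eq_square)
    also have "\<dots> = expectation (\<lambda>\<omega>. (Yt i \<omega>)^2) - (expectation (Yt i))^2"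
      by (rule variance_eq[OF Yt_int Yt2_int])
    also have "\<dots> \<le> expectation (\<lambda>\<omega>. (Yt i \<omega>)^2)" by simp
    also have "\<dots> = expectation (\<lambda>\<omega>. (tr i (Y \<omega>))^2)" by (rule E_Yt2)
    finally show "expectation (\<lambda>\<omega>. Z i \<omega> * Z i \<omega>) \<le> expectation (\<lambda>\<omega>. (tr i (Y \<omega>))^2)" .
  qed
  finally show ?thesis .
qed

lemma step5:
  assumes "0 < \<epsilon>" "1 \<le> n"
  shows "prob {\<omega>\<in>space M. \<epsilon> * real n \<le> \<bar>T n \<omega> - expectation (T n)\<bar>}
           \<le> (\<Sum>i<n. expectation (\<lambda>\<omega>. (tr i (Y \<omega>))^2)) / (\<epsilon> * real n)^2"
proof -
  have "prob {\<omega>\<in>space M. \<epsilon> * real n \<le> \<bar>T n \<omega> - expectation (T n)\<bar>}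
          \<le> expectation (\<lambda>\<omega>. (T n \<omega> - expectation (T n))^2) / (\<epsilon> * real n)^2"
    using assms by (intro Chebyshev_inequality T2_int) auto
  also have "\<dots> \<le> (\<Sum>i<n. expectation (\<lambda>\<omega>. (tr i (Y \<omega>))^2)) / (\<epsilon> * real n)^2"
    by (intro divide_right_mono step4) auto
  finally show ?thesis .
qed

end

context slln_nn begin

lemma step6:
  assumes a: "1 < a" and e: "0 < \<epsilon>"
  shows "summable (\<lambda>k. prob {\<omega>\<in>space M. \<epsilon> * real (kk a k) \<le> \<bar>T (kk a k) \<omega> - expectation (T (kk a k))\<bar>})"
proof (rule summableI_nonneg_bounded[where x="4 / (1 - 1/a^2) * (2 * expectation Y) / \<epsilon>^2"])
  fix N
  define C where "C = 4 / (1 - 1/a^2)"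
  define K where "K = kk a N"
  define q where "q i = expectation (\<lambda>\<omega>. (tr i (Y \<omega>))^2)" for i
  have q0: "0 \<le> q i" for i unfolding q_def by (intro Bochner_Integration.integral_nonneg) auto
  have a2: "1 < a^2" using a by (simp add: one_less_power)
  have C0: "0 \<le> C"
  proof -
    have "1 / a^2 \<le> 1" using a2 by (subst divide_le_eq_1) auto
    then show ?thesis unfolding C_def by simp
  qed
  have kkK: "k < N \<Longrightarrow> kk a k \<le> K" for k unfolding K_def using a by (intro kk_mono) auto
  have "(\<Sum>k<N. prob {\<omega>\<in>space M. \<epsilon> * real (kk a k) \<le> \<bar>T (kk a k) \<omega> - expectation (T (kk a k))\<bar>})
      \<le> (\<Sum>k<N. (\<Sum>i<kk a k. q i) / (\<epsilon> * real (kk a k))^2)"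
    unfolding q_def by (intro sum_mono step5) (use kk_ge1 a e in auto)
  also have "\<dots> = (\<Sum>k<N. \<Sum>i<K. (if i < kk a k then q i / (real (kk a k))^2 else 0)) / \<epsilon>^2"
  proof -
    have "(\<Sum>i<kk a k. q i) / (\<epsilon> * real (kk a k))^2 = (\<Sum>i<K. (if i < kk a k then q i / (real (kk a k))^2 else 0)) / \<epsilon>^2"
      if k: "k < N" for k
    proof -
      have "(\<Sum>i<K. (if i < kk a k then q i / (real (kk a k))^2 else 0)) = (\<Sum>i\<in>{i\<in>{..<K}. i < kk a k}. q i / (real (kk a k))^2)"
        by (rule sum.inter_filter[symmetric]) auto
      also have "{i\<in>{..<K}. i < kk a k} = {..<kk a k}" using kkK[OF k] by auto
      finally have "(\<Sum>i<K. (if i < kk a k then q i / (real (kk a k))^2 else 0)) = (\<Sum>i<kk a k. q i) / (real (kk a k))^2"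
        by (simp add: sum_divide_distrib)
      then show ?thesis by (simp add: power_mult_distrib)
    qed
    then show ?thesis by (simp add: sum_divide_distrib)
  qed
  also have "\<dots> = (\<Sum>i<K. q i * (\<Sum>k<N. if i < kk a k then 1 / (real (kk a k))^2 else 0)) / \<epsilon>^2"
  proof -
    have "(\<Sum>k<N. \<Sum>i<K. (if i < kk a k then q i / (real (kk a k))^2 else 0))
        = (\<Sum>i<K. \<Sum>k<N. q i * (if i < kk a k then 1 / (real (kk a k))^2 else 0))"
      by (subst sum.swap) (auto intro!: sum.cong)
    then show ?thesis by (simp add: sum_distrib_left)
  qed
  also have "\<dots> \<le> (\<Sum>i<K. q i * (C / (real (Suc i))^2)) / \<epsilon>^2"
    unfolding C_def
    by (intro divide_right_mono sum_mono mult_left_mono kk_sum_bound a q0) auto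
  also have "(\<Sum>i<K. q i * (C / (real (Suc i))^2)) = C * expectation (\<lambda>\<omega>. \<Sum>i<K. (tr i (Y \<omega>))^2 / (real (Suc i))^2)"
  proof -
    have "(\<Sum>i<K. q i * (C / (real (Suc i))^2)) = C * (\<Sum>i<K. expectation (\<lambda>\<omega>. (tr i (Y \<omega>))^2 / (real (Suc i))^2))"
      unfolding q_def sum_distrib_left
      by (intro sum.cong) (auto simp: integral_divide_zero)
    also have "(\<Sum>i<K. expectation (\<lambda>\<omega>. (tr i (Y \<omega>))^2 / (real (Suc i))^2)) = expectation (\<lambda>\<omega>. \<Sum>i<K. (tr i (Y \<omega>))^2 / (real (Suc i))^2)"
      by (rule Bochner_Integration.integral_sum[symmetric]) (auto intro: trY2_int)
    finally show ?thesis .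
  qed
  also have "expectation (\<lambda>\<omega>. \<Sum>i<K. (tr i (Y \<omega>))^2 / (real (Suc i))^2) \<le> expectation (\<lambda>\<omega>. 2 * Y \<omega>)"
    by (rule integral_mono) (auto intro!: intY trY2_int simp del: of_nat_Suc intro: tr_sq_sum_le[OF nnY])
  finally show "(\<Sum>k<N. prob {\<omega>\<in>space M. \<epsilon> * real (kk a k) \<le> \<bar>T (kk a k) \<omega> - expectation (T (kk a k))\<bar>})
      \<le> 4 / (1 - 1/a^2) * (2 * expectation Y) / \<epsilon>^2"
    using C0 e unfolding C_def by (simp add: divide_right_mono mult_left_mono)
qed auto

lemma step7:
  assumes a: "1 < a"
  shows "AE \<omega> in M. (\<lambda>k. T (kk a k) \<omega> / real (kk a k)) \<longlonglongrightarrow> expectation Y"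
proof -
  define B where "B l k = {\<omega>\<in>space M. (1 / real (Suc l)) * real (kk a k) \<le> \<bar>T (kk a k) \<omega> - expectation (T (kk a k))\<bar>}" for l k
  have "AE \<omega> in M. eventually (\<lambda>k. \<omega> \<in> space M - B l k) sequentially" for l
  proof (rule borel_cantelli_AE1)
    show "B l k \<in> sets M" for k unfolding B_def by measurable
    show "emeasure M (B l k) < \<infinity>" for k by (simp add: emeasure_finite less_top[symmetric])
    show "summable (\<lambda>k. measure M (B l k))" unfolding B_def
      by (rule step6[OF a]) simp
  qed
  then have "AE \<omega> in M. \<forall>l. eventually (\<lambda>k. \<omega> \<in> space M - B l k) sequentially"
    by (simp add: AE_all_countable)
  then show ?thesis
  proof (rule AE_mp, intro AE_I2 impI)
    fix \<omega> assume \<omega>: "\<omega> \<in> space M" and ev: "\<forall>l. eventually (\<lambda>k. \<omega> \<in> space M - B l k) sequentially"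
    have dev: "(\<lambda>k. (T (kk a k) \<omega> - expectation (T (kk a k))) / real (kk a k)) \<longlonglongrightarrow> 0"
    proof (rule LIMSEQ_I)
      fix r :: real assume r: "0 < r"
      obtain l where l: "inverse (real (Suc l)) < r" using reals_Archimedean[OF r] by blast
      from ev obtain K where K: "\<And>k. k \<ge> K \<Longrightarrow> \<omega> \<in> space M - B l k"
        unfolding eventually_sequentially by blast
      show "\<exists>no. \<forall>k\<ge>no. norm ((T (kk a k) \<omega> - expectation (T (kk a k))) / real (kk a k) - 0) < r"
      proof (intro exI[of _ K] allI impI)
        fix k assume "K \<le> k"
        then have "\<omega> \<notin> B l k" using K by blast
        then have h: "\<bar>T (kk a k) \<omega> - expectation (T (kk a k))\<bar> < (1 / real (Suc l)) * real (kk a k)"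
          using \<omega> unfolding B_def by auto
        have kpos: "0 < real (kk a k)" using kk_ge1[of a k] a by simp
        have "\<bar>T (kk a k) \<omega> - expectation (T (kk a k))\<bar> / real (kk a k) < 1 / real (Suc l)"
          using h kpos by (simp add: divide_less_eq)
        then show "norm ((T (kk a k) \<omega> - expectation (T (kk a k))) / real (kk a k) - 0) < r"
          using l kpos by (simp add: inverse_eq_divide)
      qed
    qed
    have ET: "(\<lambda>k. expectation (T (kk a k)) / real (kk a k)) \<longlonglongrightarrow> expectation Y"
      using filterlim_compose[OF step3 kk_filterlim[OF a]] by simp
    have "(\<lambda>k. (T (kk a k) \<omega> - expectation (T (kk a k))) / real (kk a k) + expectation (T (kk a k)) / real (kk a k))
            \<longlonglongrightarrow> 0 + expectation Y"
      by (intro tendsto_add dev ET)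
    then show "(\<lambda>k. T (kk a k) \<omega> / real (kk a k)) \<longlonglongrightarrow> expectation Y"
      by (simp add: diff_divide_distrib)
  qed
qed

theorem slln_nn_main: "AE \<omega> in M. (\<lambda>n. (\<Sum>i<n. X i \<omega>) / real n) \<longlonglongrightarrow> expectation Y"
proof -
  have "AE \<omega> in M. \<forall>j. (\<lambda>k. T (kk (1 + 1 / real (Suc j)) k) \<omega> / real (kk (1 + 1 / real (Suc j)) k)) \<longlonglongrightarrow> expectation Y"
    unfolding AE_all_countable by (intro allI step7) simp
  then have "AE \<omega> in M. (\<lambda>n. T n \<omega> / real n) \<longlonglongrightarrow> expectation Y"
  proof (rule AE_mp, intro AE_I2 impI)
    fix \<omega> assume lim: "\<forall>j. (\<lambda>k. T (kk (1 + 1 / real (Suc j)) k) \<omega> / real (kk (1 + 1 / real (Suc j)) k)) \<longlonglongrightarrow> expectation Y"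
    show "(\<lambda>n. T n \<omega> / real n) \<longlonglongrightarrow> expectation Y"
    proof (rule interp[where T="\<lambda>n. T n \<omega>"])
      show "T m \<omega> \<le> T m' \<omega>" if "m \<le> m'" for m m'
        unfolding T_def using that Yt_bounds by (intro sum_mono2) auto
      show "0 \<le> T m \<omega>" for m by (rule T_bounds)
    qed (use lim in auto)
  qed
  with step2 show ?thesis
  proof (rule AE_mp[OF _ AE_mp], intro AE_I2 impI)
    fix \<omega> assume l1: "(\<lambda>n. ((\<Sum>i<n. X i \<omega>) - T n \<omega>) / real n) \<longlonglongrightarrow> 0"
      and l2: "(\<lambda>n. T n \<omega> / real n) \<longlonglongrightarrow> expectation Y"
    have "(\<lambda>n. ((\<Sum>i<n. X i \<omega>) - T n \<omega>) / real n + T n \<omega> / real n) \<longlonglongrightarrow> 0 + expectation Y"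
      by (intro tendsto_add l1 l2)
    then show "(\<lambda>n. (\<Sum>i<n. X i \<omega>) / real n) \<longlonglongrightarrow> expectation Y"
      by (simp add: diff_divide_distrib)
  qed
qed

end

lemma (in prob_space) slln_compose_nn:
  fixes X :: "nat \<Rightarrow> 'a \<Rightarrow> real" and Y :: "'a \<Rightarrow> real" and g :: "real \<Rightarrow> real"
  assumes [measurable]: "\<And>i. X i \<in> borel_measurable M" "Y \<in> borel_measurable M" "g \<in> borel_measurable borel"
    and ind: "\<And>i j. i \<noteq> j \<Longrightarrow> indep_var borel (X i) borel (X j)"
    and d: "\<And>i. distr M borel (X i) = distr M borel Y"
    and intg: "integrable M (\<lambda>\<omega>. g (Y \<omega>))"
    and g0: "\<And>x. 0 \<le> g x"
  shows "AE \<omega> in M. (\<lambda>n. (\<Sum>i<n. g (X i \<omega>)) / real n) \<longlonglongrightarrow> expectation (\<lambda>\<omega>. g (Y \<omega>))"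
proof -
  interpret S: slln_nn M "\<lambda>i \<omega>. g (X i \<omega>)" "\<lambda>\<omega>. g (Y \<omega>)"
  proof
    show "indep_var borel (\<lambda>\<omega>. g (X i \<omega>)) borel (\<lambda>\<omega>. g (X j \<omega>))" if "i \<noteq> j" for i j
      using indep_var_compose[OF ind[OF that], of g borel g borel] by (simp add: comp_def)
    show "distr M borel (\<lambda>\<omega>. g (X i \<omega>)) = distr M borel (\<lambda>\<omega>. g (Y \<omega>))" for i
    proof -
      have "distr M borel (\<lambda>\<omega>. g (X i \<omega>)) = distr (distr M borel (X i)) borel g"
        by (subst distr_distr) (auto simp: comp_def)
      also have "\<dots> = distr (distr M borel Y) borel g" using d by simp
      also have "\<dots> = distr M borel (\<lambda>\<omega>. g (Y \<omega>))"
        by (subst distr_distr) (auto simp: comp_def)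
      finally show ?thesis .
    qed
  qed (auto intro: intg g0)
  show ?thesis by (rule S.slln_nn_main)
qed

theorem (in prob_space) slln_real:
  fixes X :: "nat \<Rightarrow> 'a \<Rightarrow> real" and Y :: "'a \<Rightarrow> real"
  assumes [measurable]: "\<And>i. X i \<in> borel_measurable M" "Y \<in> borel_measurable M"
    and ind: "\<And>i j. i \<noteq> j \<Longrightarrow> indep_var borel (X i) borel (X j)"
    and d: "\<And>i. distr M borel (X i) = distr M borel Y"
    and intY: "integrable M Y"
  shows "AE \<omega> in M. (\<lambda>n. (\<Sum>i<n. X i \<omega>) / real n) \<longlonglongrightarrow> expectation Y"
proof -
  define gp where "gp x = max x 0" for x :: real
  define gn where "gn x = max (- x) 0" for x :: real
  have [measurable]: "gp \<in> borel_measurable borel" "gn \<in> borel_measurable borel"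
    unfolding gp_def gn_def by measurable
  have ip: "integrable M (\<lambda>\<omega>. gp (Y \<omega>))"
    by (rule Bochner_Integration.integrable_bound[OF intY]) (auto simp: gp_def)
  have in': "integrable M (\<lambda>\<omega>. gn (Y \<omega>))"
    by (rule Bochner_Integration.integrable_bound[OF intY]) (auto simp: gn_def)
  have P: "AE \<omega> in M. (\<lambda>n. (\<Sum>i<n. gp (X i \<omega>)) / real n) \<longlonglongrightarrow> expectation (\<lambda>\<omega>. gp (Y \<omega>))"
    by (rule slln_compose_nn[OF _ _ _ ind d ip]) (auto simp: gp_def)
  have N: "AE \<omega> in M. (\<lambda>n. (\<Sum>i<n. gn (X i \<omega>)) / real n) \<longlonglongrightarrow> expectation (\<lambda>\<omega>. gn (Y \<omega>))"
    by (rule slln_compose_nn[OF _ _ _ ind d in']) (auto simp: gn_def)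
  have EY: "expectation Y = expectation (\<lambda>\<omega>. gp (Y \<omega>)) - expectation (\<lambda>\<omega>. gn (Y \<omega>))"
  proof -
    have "expectation Y = expectation (\<lambda>\<omega>. gp (Y \<omega>) - gn (Y \<omega>))"
      by (rule Bochner_Integration.integral_cong) (auto simp: gp_def gn_def)
    then show ?thesis using ip in' by simp
  qed
  show ?thesis using P N
  proof (rule AE_mp[OF _ AE_mp], intro AE_I2 impI)
    fix \<omega>
    assume l1: "(\<lambda>n. (\<Sum>i<n. gp (X i \<omega>)) / real n) \<longlonglongrightarrow> expectation (\<lambda>\<omega>. gp (Y \<omega>))"
      and l2: "(\<lambda>n. (\<Sum>i<n. gn (X i \<omega>)) / real n) \<longlonglongrightarrow> expectation (\<lambda>\<omega>. gn (Y \<omega>))"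
    have "(\<lambda>n. (\<Sum>i<n. gp (X i \<omega>)) / real n - (\<Sum>i<n. gn (X i \<omega>)) / real n) \<longlonglongrightarrow> expectation Y"
      unfolding EY by (intro tendsto_diff l1 l2)
    moreover have "(\<Sum>i<n. gp (X i \<omega>)) / real n - (\<Sum>i<n. gn (X i \<omega>)) / real n = (\<Sum>i<n. X i \<omega>) / real n" for n
    proof -
      have "(\<Sum>i<n. gp (X i \<omega>)) - (\<Sum>i<n. gn (X i \<omega>)) = (\<Sum>i<n. X i \<omega>)"
        unfolding sum_subtractf[symmetric] by (intro sum.cong) (auto simp: gp_def gn_def)
      then show ?thesis by (simp add: diff_divide_distrib[symmetric])
    qed
    ultimately show "(\<lambda>n. (\<Sum>i<n. X i \<omega>) / real n) \<longlonglongrightarrow> expectation Y" by simp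
  qed
qed

lemma enum_nested:
  fixes C :: "nat \<Rightarrow> 'b set"
  assumes fin: "\<And>j. finite (C j)" and mono: "\<And>j. C j \<subseteq> C (Suc j)" and C0: "C 0 = {}"
    and unb: "\<And>n. \<exists>j. n < card (C j)"
  shows "\<exists>e. inj e \<and> (\<forall>j. e ` {..<card (C j)} = C j)"
proof -
  define c where "c j = card (C j)" for j
  have Cmono: "j \<le> j' \<Longrightarrow> C j \<subseteq> C j'" for j j'
    using lift_Suc_mono_le[of C, OF mono] by blast
  have cmono: "j \<le> j' \<Longrightarrow> c j \<le> c j'" for j j'
    unfolding c_def using Cmono fin by (intro card_mono) auto
  have c0: "c 0 = 0" unfolding c_def C0 by simp
  have ex_f: "\<exists>f. bij_betw f {c j..<c (Suc j)} (C (Suc j) - C j)" for j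
  proof (rule finite_same_card_bij)
    show "card {c j..<c (Suc j)} = card (C (Suc j) - C j)"
      unfolding c_def using fin mono by (simp add: card_Diff_subset)
  qed (use fin in auto)
  define f where "f j = (SOME f. bij_betw f {c j..<c (Suc j)} (C (Suc j) - C j))" for j
  have f: "bij_betw (f j) {c j..<c (Suc j)} (C (Suc j) - C j)" for j
    unfolding f_def by (rule someI_ex[OF ex_f])
  define sh where "sh n = (LEAST j. n < c (Suc j))" for n
  have sh_eq: "sh n = j" if "c j \<le> n" "n < c (Suc j)" for n j
    unfolding sh_def
  proof (rule Least_equality)
    show "n < c (Suc j)" by fact
    show "j \<le> y" if "n < c (Suc y)" for y
    proof (rule ccontr)
      assume "\<not> j \<le> y"
      then have "c (Suc y) \<le> c j" by (intro cmono) auto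
      with that \<open>c j \<le> n\<close> show False by simp
    qed
  qed
  have sh_in: "c (sh n) \<le> n \<and> n < c (Suc (sh n))" for n
  proof -
    obtain j where j: "n < c j" using unb unfolding c_def by blast
    then have "j \<noteq> 0" using c0 by (cases j) auto
    then obtain j' where "j = Suc j'" by (cases j) auto
    then have ex: "\<exists>j. n < c (Suc j)" using j by blast
    have s1: "n < c (Suc (sh n))" unfolding sh_def by (rule LeastI_ex[OF ex])
    have s2: "c (sh n) \<le> n"
    proof (cases "sh n")
      case 0 then show ?thesis using c0 by simp
    next
      case (Suc k)
      then have "\<not> n < c (Suc k)"
        using not_less_Least[of k "\<lambda>j. n < c (Suc j)"] unfolding sh_def by auto
      then show ?thesis using Suc by simp
    qed
    show ?thesis using s1 s2 by simp
  qed
  define e where "e n = f (sh n) n" for n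
  have e_shell: "e ` {c j..<c (Suc j)} = C (Suc j) - C j" for j
  proof -
    have "e ` {c j..<c (Suc j)} = f j ` {c j..<c (Suc j)}"
      unfolding e_def by (intro image_cong refl) (auto simp: sh_eq)
    also have "\<dots> = C (Suc j) - C j" using f[of j] by (simp add: bij_betw_def)
    finally show ?thesis .
  qed
  have img: "e ` {..<c j} = C j" for j
  proof (induction j)
    case 0 then show ?case using c0 C0 by simp
  next
    case (Suc j)
    have "{..<c (Suc j)} = {..<c j} \<union> {c j..<c (Suc j)}" using cmono[of j "Suc j"] by auto
    then have "e ` {..<c (Suc j)} = C j \<union> (C (Suc j) - C j)" using Suc e_shell by (simp add: image_Un)
    also have "\<dots> = C (Suc j)" using mono by auto
    finally show ?case .
  qed
  have "inj e"
  proof (rule injI)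
    fix n1 n2 assume eq: "e n1 = e n2"
    define j1 where "j1 = sh n1"
    define j2 where "j2 = sh n2"
    have n1: "n1 \<in> {c j1..<c (Suc j1)}" using sh_in[of n1] unfolding j1_def by auto
    have n2: "n2 \<in> {c j2..<c (Suc j2)}" using sh_in[of n2] unfolding j2_def by auto
    have e1: "e n1 \<in> C (Suc j1) - C j1" using e_shell[of j1] n1 by blast
    have e2: "e n2 \<in> C (Suc j2) - C j2" using e_shell[of j2] n2 by blast
    have "j1 = j2"
    proof (rule ccontr)
      assume "j1 \<noteq> j2"
      then consider "j1 < j2" | "j2 < j1" by linarith
      then show False
      proof cases
        case 1
        then have "C (Suc j1) \<subseteq> C j2" by (intro Cmono) auto
        then show False using e1 e2 eq by auto
      next
        case 2
        then have "C (Suc j2) \<subseteq> C j1" by (intro Cmono) auto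
        then show False using e1 e2 eq by auto
      qed
    qed
    then have "f j1 n1 = f j1 n2" using eq unfolding e_def j1_def j2_def by simp
    then show "n1 = n2" using f[of j1] n1 n2 \<open>j1 = j2\<close> unfolding bij_betw_def inj_on_def by blast
  qed
  then show ?thesis using img unfolding c_def by blast
qed

lemma zbox_eq: "zbox m = vec_lambda ` (PiE UNIV (\<lambda>_. {- int m..int m}))"
proof
  show "zbox m \<subseteq> vec_lambda ` (PiE UNIV (\<lambda>_. {- int m..int m}))"
  proof
    fix z assume "z \<in> zbox m"
    then have "(\<lambda>i. z $ i) \<in> PiE UNIV (\<lambda>_. {- int m..int m})"
      unfolding zbox_def by (auto simp: PiE_iff abs_le_iff minus_le_iff)
    moreover have "z = vec_lambda (\<lambda>i. z $ i)" by simp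
    ultimately show "z \<in> vec_lambda ` (PiE UNIV (\<lambda>_. {- int m..int m}))" by blast
  qed
  show "vec_lambda ` (PiE UNIV (\<lambda>_. {- int m..int m})) \<subseteq> zbox m"
    unfolding zbox_def by (auto simp: PiE_iff abs_le_iff minus_le_iff)
qed

lemma card_zbox: "card (zbox m :: (int^'d::finite) set) = (2*m+1)^CARD('d)"
proof -
  have "inj_on (vec_lambda :: ('d \<Rightarrow> int) \<Rightarrow> int^'d) (PiE UNIV (\<lambda>_. {- int m..int m}))"
    by (auto simp: inj_on_def)
  then have "card (zbox m :: (int^'d::finite) set) = card (PiE (UNIV::'d set) (\<lambda>_. {- int m..int m}))"
    unfolding zbox_eq by (rule card_image)
  also have "\<dots> = (2*m+1)^CARD('d)"
  proof -
    have h: "nat (int m - - int m + 1) = 2*m+1" by arith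
    have "card (PiE (UNIV::'d set) (\<lambda>_. {- int m..int m})) = (\<Prod>i\<in>(UNIV::'d set). card {- int m..int m})"
      by (rule card_PiE) simp
    also have "\<dots> = (2*m+1)^CARD('d)" using h by simp
    finally show ?thesis .
  qed
  finally show ?thesis .
qed

lemma finite_zbox: "finite (zbox m :: (int^'d::finite) set)"
  unfolding zbox_eq by (intro finite_imageI finite_PiE) auto

lemma zbox_mono: assumes "m \<le> m'" shows "zbox m \<subseteq> zbox m'"
proof
  fix x :: "int^'a" assume "x \<in> zbox m"
  then have "\<bar>x $ i\<bar> \<le> int m" for i unfolding zbox_def by auto
  moreover have "int m \<le> int m'" using assms by simp
  ultimately show "x \<in> zbox m'" unfolding zbox_def using order_trans by blast
qed

lemma zbox_enum: "\<exists>e :: nat \<Rightarrow> int^'d::finite. inj e \<and> (\<forall>m. e ` {..<(2*m+1)^CARD('d)} = zbox m)"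
proof -
  define C :: "nat \<Rightarrow> (int^'d) set" where "C j = (if j = 0 then {} else zbox (j - 1))" for j
  have cardC: "card (C (Suc m)) = (2*m+1)^CARD('d)" for m unfolding C_def by (simp add: card_zbox)
  have "\<exists>e. inj e \<and> (\<forall>j. e ` {..<card (C j)} = C j)"
  proof (rule enum_nested)
    show "finite (C j)" for j unfolding C_def by (simp add: finite_zbox)
    show "C j \<subseteq> C (Suc j)" for j unfolding C_def by (auto intro: zbox_mono[of "j - 1" j, THEN subsetD])
    show "C 0 = {}" unfolding C_def by simp
    show "\<exists>j. n < card (C j)" for n
    proof (intro exI[of _ "Suc n"])
      have "2*n+1 \<le> (2*n+1)^CARD('d)" by (rule self_le_power) auto
      then show "n < card (C (Suc n))" unfolding cardC by simp
    qed
  qed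
  then obtain e :: "nat \<Rightarrow> int^'d" where "inj e" "\<And>j. e ` {..<card (C j)} = C j" by blast
  then show ?thesis using cardC by (metis C_def diff_Suc_1 nat.distinct(1))
qed

lemma meas_comp_nth: "(\<lambda>f. f a $ c) \<in> borel_measurable (PiM {a} (\<lambda>_. borel :: (real^'h::finite) measure))"
proof -
  have "(\<lambda>f. f a) \<in> measurable (PiM {a} (\<lambda>_. borel :: (real^'h) measure)) borel"
    by (rule measurable_component_singleton) simp
  then show ?thesis by (rule measurable_compose) (rule borel_measurable_nth)
qed

lemma (in prob_space) box_avg:
  fixes F :: "int^'d::finite \<Rightarrow> 'a \<Rightarrow> real^'h::finite" and G :: "'a \<Rightarrow> real^'h"
  assumes measF[measurable]: "\<And>z. F z \<in> borel_measurable M" and measG[measurable]: "G \<in> borel_measurable M"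
    and ind: "indep_vars (\<lambda>_. borel) F UNIV"
    and d: "\<And>z. distr M borel (F z) = distr M borel G"
    and intG: "integrable M G"
  shows "AE \<omega> in M. (\<lambda>m. (1 / real ((2*m+1)^CARD('d))) *\<^sub>R (\<Sum>z\<in>zbox m. F z \<omega>)) \<longlonglongrightarrow> expectation G"
proof -
  obtain e :: "nat \<Rightarrow> int^'d" where inj: "inj e" and img: "\<And>m. e ` {..<(2*m+1)^CARD('d)} = zbox m"
    using zbox_enum by blast
  define N :: "nat \<Rightarrow> nat" where "N m = (2*m+1)^CARD('d)" for m
  have Nlim: "filterlim N at_top sequentially"
  proof (rule filterlim_at_top_mono[OF filterlim_ident])
    show "eventually (\<lambda>m. m \<le> N m) sequentially"
    proof (intro always_eventually allI)
      fix m
      have "2*m+1 \<le> (2*m+1::nat)^CARD('d)" by (rule self_le_power) auto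
      then show "m \<le> N m" unfolding N_def by simp
    qed
  qed
  have comp: "AE \<omega> in M. (\<lambda>m. (\<Sum>j<N m. F (e j) \<omega> $ c) / real (N m)) \<longlonglongrightarrow> expectation G $ c" for c
  proof -
    have AE1: "AE \<omega> in M. (\<lambda>n. (\<Sum>j<n. F (e j) \<omega> $ c) / real n) \<longlonglongrightarrow> expectation (\<lambda>\<omega>. G \<omega> $ c)"
    proof (rule slln_real)
      show "indep_var borel (\<lambda>\<omega>. F (e i) \<omega> $ c) borel (\<lambda>\<omega>. F (e j) \<omega> $ c)" if ij: "i \<noteq> j" for i j
      proof -
        have ab: "e i \<noteq> e j" using inj ij by (auto dest: injD)
        have "indep_var (PiM {e i} (\<lambda>_. borel)) (\<lambda>\<omega>. restrict (\<lambda>k. F k \<omega>) {e i})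
                        (PiM {e j} (\<lambda>_. borel)) (\<lambda>\<omega>. restrict (\<lambda>k. F k \<omega>) {e j})"
          by (rule indep_var_restrict[OF ind]) (use ab in auto)
        then have "indep_var borel ((\<lambda>f. f (e i) $ c) \<circ> (\<lambda>\<omega>. restrict (\<lambda>k. F k \<omega>) {e i}))
                             borel ((\<lambda>f. f (e j) $ c) \<circ> (\<lambda>\<omega>. restrict (\<lambda>k. F k \<omega>) {e j}))"
          by (rule indep_var_compose)
             (rule meas_comp_nth)+
        then show ?thesis by (simp add: comp_def)
      qed
      show "distr M borel (\<lambda>\<omega>. F (e i) \<omega> $ c) = distr M borel (\<lambda>\<omega>. G \<omega> $ c)" for i
      proof -
        have "distr M borel (\<lambda>\<omega>. F (e i) \<omega> $ c) = distr (distr M borel (F (e i))) borel (\<lambda>x. x $ c)"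
          by (subst distr_distr) (auto simp: comp_def)
        also have "\<dots> = distr (distr M borel G) borel (\<lambda>x. x $ c)" using d by simp
        also have "\<dots> = distr M borel (\<lambda>\<omega>. G \<omega> $ c)"
          by (subst distr_distr) (auto simp: comp_def)
        finally show ?thesis .
      qed
      show "integrable M (\<lambda>\<omega>. G \<omega> $ c)"
        by (rule integrable_bounded_linear[OF bounded_linear_vec_nth intG])
    qed (auto intro: measurable_compose[OF _ borel_measurable_nth])
    have eqE: "expectation (\<lambda>\<omega>. G \<omega> $ c) = expectation G $ c"
      by (rule integral_bounded_linear[OF bounded_linear_vec_nth intG])
    show ?thesis using AE1 unfolding eqE
    proof (rule AE_mp, intro AE_I2 impI)
      fix \<omega> assume h: "(\<lambda>n. (\<Sum>j<n. F (e j) \<omega> $ c) / real n) \<longlonglongrightarrow> expectation G $ c"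
      show "(\<lambda>m. (\<Sum>j<N m. F (e j) \<omega> $ c) / real (N m)) \<longlonglongrightarrow> expectation G $ c"
        using filterlim_compose[OF h Nlim] by simp
    qed
  qed
  have "AE \<omega> in M. \<forall>c\<in>UNIV. (\<lambda>m. (\<Sum>j<N m. F (e j) \<omega> $ c) / real (N m)) \<longlonglongrightarrow> expectation G $ c"
    by (rule AE_finite_allI) (use comp in auto)
  then show ?thesis
  proof (rule AE_mp, intro AE_I2 impI)
    fix \<omega> assume h: "\<forall>c\<in>UNIV. (\<lambda>m. (\<Sum>j<N m. F (e j) \<omega> $ c) / real (N m)) \<longlonglongrightarrow> expectation G $ c"
    show "(\<lambda>m. (1 / real ((2*m+1)^CARD('d))) *\<^sub>R (\<Sum>z\<in>zbox m. F z \<omega>)) \<longlonglongrightarrow> expectation G"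
    proof (rule vec_tendstoI)
      fix c
      have eq: "((1 / real ((2*m+1)^CARD('d))) *\<^sub>R (\<Sum>z\<in>zbox m. F z \<omega>)) $ c = (\<Sum>j<N m. F (e j) \<omega> $ c) / real (N m)" for m
      proof -
        have "(\<Sum>z\<in>zbox m. F z \<omega>) = (\<Sum>j<N m. F (e j) \<omega>)"
          unfolding img[of m, symmetric] N_def
          by (subst sum.reindex) (use inj in \<open>auto intro: inj_on_subset\<close>)
        then show ?thesis unfolding N_def by simp
      qed
      show "(\<lambda>m. ((1 / real ((2*m+1)^CARD('d))) *\<^sub>R (\<Sum>z\<in>zbox m. F z \<omega>)) $ c) \<longlonglongrightarrow> expectation G $ c"
      proof -
        have "(\<lambda>m. ((1 / real ((2*m+1)^CARD('d))) *\<^sub>R (\<Sum>z\<in>zbox m. F z \<omega>)) $ c) = (\<lambda>m. (\<Sum>j<N m. F (e j) \<omega> $ c) / real (N m))"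
          by (rule ext) (rule eq)
        then show ?thesis using h by simp
      qed
    qed
  qed
qed

lemma mblock_spec:
  assumes k: "1 \<le> k" and n: "k \<le> n"
  shows "(2 * mblock k n + 1) * k \<le> n \<and> n < (2 * mblock k n + 3) * k"
proof -
  define P where "P m \<longleftrightarrow> (2*m+1)*k \<le> n \<and> n < (2*m+3)*k" for m
  define q where "q = n div k"
  define m0 where "m0 = (q - 1) div 2"
  have q1: "1 \<le> q" unfolding q_def using k n by (simp add: div_greater_zero_iff Suc_le_eq)
  have qk: "q * k \<le> n" using div_mult_mod_eq[of n k] unfolding q_def by linarith
  have qk2: "n < (q + 1) * k"
  proof -
    have "n = q * k + n mod k" unfolding q_def by simp
    moreover have "n mod k < k" using k by simp
    ultimately show ?thesis by (simp add: algebra_simps)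
  qed
  have m0a: "2*m0+1 \<le> q" "q \<le> 2*m0+2" unfolding m0_def using q1 by auto
  have "P m0" unfolding P_def
  proof
    have "(2*m0+1)*k \<le> q*k" using m0a by (intro mult_le_mono1) auto
    then show "(2*m0+1)*k \<le> n" using qk by linarith
    have "(q+1)*k \<le> (2*m0+3)*k" using m0a by (intro mult_le_mono1) auto
    then show "n < (2*m0+3)*k" using qk2 by linarith
  qed
  moreover have "m = m0" if "P m" for m
  proof (rule ccontr)
    assume "m \<noteq> m0"
    then consider "m < m0" | "m0 < m" by linarith
    then show False
    proof cases
      case 1
      then have "(2*m+3)*k \<le> (2*m0+1)*k" by (intro mult_le_mono1) auto
      then show False using that \<open>P m0\<close> unfolding P_def by linarith
    next
      case 2
      then have "(2*m0+3)*k \<le> (2*m+1)*k" by (intro mult_le_mono1) auto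
      then show False using that \<open>P m0\<close> unfolding P_def by linarith
    qed
  qed
  ultimately have "mblock k n = m0" unfolding mblock_def P_def[symmetric]
    by (rule the_equality) (use \<open>P m0\<close> \<open>\<And>m. P m \<Longrightarrow> m = m0\<close> in blast)+
  then show ?thesis using \<open>P m0\<close> unfolding P_def by simp
qed

lemma mb_tendsto:
  assumes k: "1 \<le> k" shows "filterlim (mblock k) at_top sequentially"
  unfolding filterlim_at_top
proof (intro allI)
  fix Z
  show "eventually (\<lambda>n. Z \<le> mblock k n) sequentially"
    unfolding eventually_sequentially
  proof (intro exI[of _ "(2*Z+3)*k"] allI impI)
    fix n assume n: "(2*Z+3)*k \<le> n"
    have "k \<le> (2*Z+3)*k" by simp
    then have kn: "k \<le> n" using n by linarith
    show "Z \<le> mblock k n"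
    proof (rule ccontr)
      assume "\<not> Z \<le> mblock k n"
      then have "(2 * mblock k n + 3) * k \<le> (2*Z+3)*k" by (intro mult_le_mono1) auto
      then show False using mblock_spec[OF k kn] n by linarith
    qed
  qed
qed

lemma ratio_tendsto:
  assumes k: "1 \<le> k"
  shows "(\<lambda>n. (2 * real ((2 * mblock k n + 1) * k))^D / (2 * real n)^D) \<longlonglongrightarrow> 1"
proof -
  have "(\<lambda>n. real ((2 * mblock k n + 1) * k) / real n) \<longlonglongrightarrow> 1"
  proof (rule tendsto_sandwich[where f="\<lambda>n. 1 - 2 * real k / real n" and h="\<lambda>n. 1"])
    show "eventually (\<lambda>n. 1 - 2 * real k / real n \<le> real ((2 * mblock k n + 1) * k) / real n) sequentially"
      unfolding eventually_sequentially
    proof (intro exI[of _ k] allI impI)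
      fix n assume n: "k \<le> n"
      have npos: "0 < real n" using k n by simp
      have "n < (2 * mblock k n + 1) * k + 2 * k" using mblock_spec[OF k n] by (simp add: algebra_simps)
      then have "real n - 2 * real k \<le> real ((2 * mblock k n + 1) * k)" by linarith
      then have "(real n - 2 * real k) / real n \<le> real ((2 * mblock k n + 1) * k) / real n"
        using npos by (intro divide_right_mono) auto
      moreover have "1 - 2 * real k / real n = (real n - 2 * real k) / real n"
        using npos by (simp add: diff_divide_distrib)
      ultimately show "1 - 2 * real k / real n \<le> real ((2 * mblock k n + 1) * k) / real n" by simp
    qed
    show "eventually (\<lambda>n. real ((2 * mblock k n + 1) * k) / real n \<le> 1) sequentially"
      unfolding eventually_sequentially
    proof (intro exI[of _ k] allI impI)
      fix n assume n: "k \<le> n"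
      have npos: "0 < real n" using k n by simp
      have "real ((2 * mblock k n + 1) * k) \<le> real n" using mblock_spec[OF k n] by linarith
      then show "real ((2 * mblock k n + 1) * k) / real n \<le> 1" using npos by simp
    qed
    have "(\<lambda>n. 1 - 2 * real k / real n) \<longlonglongrightarrow> 1 - 0" by (intro tendsto_intros)
    then show "(\<lambda>n. 1 - 2 * real k / real n) \<longlonglongrightarrow> 1" by simp
  qed auto
  then have lim: "(\<lambda>n. (real ((2 * mblock k n + 1) * k) / real n)^D) \<longlonglongrightarrow> 1^D" by (intro tendsto_power)
  have aux: "(2 * a)^D / (2 * b)^D = (a / b)^D" for a b :: real
  proof -
    have h: "(2 * a) / (2 * b) = a / b" by simp
    show ?thesis by (simp only: power_divide[symmetric] h)
  qed
  have eqf: "(\<lambda>n. (2 * real ((2 * mblock k n + 1) * k))^D / (2 * real n)^D) = (\<lambda>n. (real ((2 * mblock k n + 1) * k) / real n)^D)"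
    by (rule ext) (rule aux)
  show ?thesis unfolding eqf using lim by (simp only: power_one)
qed

lemma sub1:
  fixes S :: "nat \<Rightarrow> 'v::real_normed_vector" and \<nu> :: 'v
  assumes k: "1 \<le> k"
    and B: "eventually (\<lambda>m. norm ((1 / (2 * real ((2*m+1)*k))^D) *\<^sub>R S ((2*m+1)*k) - \<nu>) \<le> \<delta>) sequentially"
    and G2: "(\<lambda>n. norm (S n - S ((2 * mblock k n + 1) * k)) / (2 * real n)^D) \<longlonglongrightarrow> 0"
    and \<eta>: "0 < \<eta>"
  shows "eventually (\<lambda>n. norm ((1 / (2 * real n)^D) *\<^sub>R S n - \<nu>) \<le> \<delta> + \<eta>) sequentially"
proof -
  define lam where "lam n = (2 * real n)^D" for n
  define nk where "nk n = (2 * mblock k n + 1) * k" for n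
  define Bm where "Bm n = (1 / lam (nk n)) *\<^sub>R S (nk n)" for n
  define r where "r n = lam (nk n) / lam n" for n
  have B': "eventually (\<lambda>n. norm (Bm n - \<nu>) \<le> \<delta>) sequentially"
  proof -
    have "eventually (\<lambda>n. (\<lambda>m. norm ((1 / (2 * real ((2*m+1)*k))^D) *\<^sub>R S ((2*m+1)*k) - \<nu>) \<le> \<delta>) (mblock k n)) sequentially"
      using filterlim_iff[THEN iffD1, OF mb_tendsto[OF k]] B by blast
    then show ?thesis unfolding Bm_def lam_def nk_def by simp
  qed
  have r1: "r \<longlonglongrightarrow> 1" unfolding r_def lam_def nk_def using ratio_tendsto[OF k] by simp
  have t1: "(\<lambda>n. norm (S n - S (nk n)) / lam n) \<longlonglongrightarrow> 0" using G2 unfolding nk_def lam_def .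
  have "(\<lambda>n. r n - 1) \<longlonglongrightarrow> 0" using r1 by (simp add: LIM_zero)
  then have "(\<lambda>n. \<bar>r n - 1\<bar>) \<longlonglongrightarrow> 0" by (simp add: tendsto_rabs_zero)
  then have t2: "(\<lambda>n. \<bar>r n - 1\<bar> * (norm \<nu> + \<delta>)) \<longlonglongrightarrow> 0" by (rule tendsto_mult_left_zero)
  have "(\<lambda>n. norm (S n - S (nk n)) / lam n + \<bar>r n - 1\<bar> * (norm \<nu> + \<delta>)) \<longlonglongrightarrow> 0 + 0"
    by (intro tendsto_add t1 t2)
  then have ev: "eventually (\<lambda>n. norm (S n - S (nk n)) / lam n + \<bar>r n - 1\<bar> * (norm \<nu> + \<delta>) < \<eta>) sequentially"
    using order_tendstoD(2) \<eta> by simp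
  show ?thesis
    using B' ev eventually_ge_at_top[of k]
  proof eventually_elim
    case (elim n)
    then have n: "k \<le> n" and Bn: "norm (Bm n - \<nu>) \<le> \<delta>" by auto
    have lpos: "0 < lam n" unfolding lam_def using n k by simp
    have nk1: "k \<le> nk n" unfolding nk_def by simp
    have lkpos: "0 < lam (nk n)" unfolding lam_def using nk1 k by simp
    have h: "(1 / lam n) *\<^sub>R S (nk n) = r n *\<^sub>R Bm n"
      unfolding r_def Bm_def using lpos lkpos by simp
    have dec: "(1 / lam n) *\<^sub>R S n - \<nu> = (1 / lam n) *\<^sub>R (S n - S (nk n)) + (r n - 1) *\<^sub>R Bm n + (Bm n - \<nu>)"
      using h by (simp add: algebra_simps)
    have "norm ((1 / lam n) *\<^sub>R S n - \<nu>) \<le> norm ((1 / lam n) *\<^sub>R (S n - S (nk n))) + norm ((r n - 1) *\<^sub>R Bm n) + norm (Bm n - \<nu>)"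
      unfolding dec by (intro order_trans[OF norm_triangle_ineq] add_right_mono norm_triangle_ineq)
    also have "norm ((1 / lam n) *\<^sub>R (S n - S (nk n))) = norm (S n - S (nk n)) / lam n"
      using lpos by simp
    also have "norm ((r n - 1) *\<^sub>R Bm n) \<le> \<bar>r n - 1\<bar> * (norm \<nu> + \<delta>)"
    proof -
      have "norm (Bm n) \<le> norm \<nu> + norm (Bm n - \<nu>)" by (metis norm_triangle_sub add.commute)
      then have "norm (Bm n) \<le> norm \<nu> + \<delta>" using Bn by linarith
      then show ?thesis by (simp add: mult_left_mono)
    qed
    finally have "norm ((1 / lam n) *\<^sub>R S n - \<nu>) \<le> norm (S n - S (nk n)) / lam n + \<bar>r n - 1\<bar> * (norm \<nu> + \<delta>) + \<delta>"
      using Bn by linarith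
    then show ?case using elim unfolding lam_def by linarith
  qed
qed

lemma core:
  fixes S :: "nat \<Rightarrow> 'v::banach" and A :: "nat \<Rightarrow> nat \<Rightarrow> 'v" and \<mu> :: "nat \<Rightarrow> 'v"
  assumes G1: "\<And>k. r+1 \<le> k \<Longrightarrow> (\<lambda>m. (1 / real ((2*m+1)^D)) *\<^sub>R A k m) \<longlonglongrightarrow> \<mu> k"
    and G2: "\<And>k. 1 \<le> k \<Longrightarrow> (\<lambda>n. norm (S n - S ((2 * mblock k n + 1) * k)) / (2*real n)^D) \<longlonglongrightarrow> 0"
    and G3: "(\<lambda>k. SUP m\<in>{1..}. ereal (norm (S ((2*m+1)*k) - A k m) / (2 * real ((2*m+1)*k))^D)) \<longlonglongrightarrow> 0"
  shows "\<exists>L. (\<lambda>n. (1/(2*real n)^D) *\<^sub>R S n) \<longlonglongrightarrow> L \<and> (\<lambda>k. (1/(2*real k)^D) *\<^sub>R \<mu> k) \<longlonglongrightarrow> L"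
proof -
  define s where "s n = (1/(2*real n)^D) *\<^sub>R S n" for n
  define \<nu> where "\<nu> k = (1/(2*real k)^D) *\<^sub>R \<mu> k" for k
  have key: "eventually (\<lambda>k. \<forall>\<eta>>0. eventually (\<lambda>n. norm (s n - \<nu> k) \<le> 2*\<delta> + \<eta>) sequentially) sequentially"
    if \<delta>: "0 < \<delta>" for \<delta>
  proof -
    have ev3: "eventually (\<lambda>k. (SUP m\<in>{1..}. ereal (norm (S ((2*m+1)*k) - A k m) / (2 * real ((2*m+1)*k))^D)) < ereal \<delta>) sequentially"
      using order_tendstoD(2)[OF G3, of "ereal \<delta>"] \<delta> by (simp add: zero_ereal_def)
    show ?thesis
      using ev3 eventually_ge_at_top[of "r+1"]
    proof eventually_elim
      case (elim k)
      then have rk: "r+1 \<le> k" and k1: "1 \<le> k" by auto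
      have bnd: "norm (S ((2*m+1)*k) - A k m) / (2 * real ((2*m+1)*k))^D \<le> \<delta>" if m: "1 \<le> m" for m
      proof -
        have "ereal (norm (S ((2*m+1)*k) - A k m) / (2 * real ((2*m+1)*k))^D)
              \<le> (SUP m\<in>{1..}. ereal (norm (S ((2*m+1)*k) - A k m) / (2 * real ((2*m+1)*k))^D))"
          using m by (intro SUP_upper) auto
        also have "\<dots> < ereal \<delta>" using elim by simp
        finally show ?thesis by simp
      qed
      have lamk: "(2 * real ((2*m+1)*k))^D = real ((2*m+1)^D) * (2*real k)^D" for m
      proof -
        have e1: "2 * real ((2*m+1)*k) = real (2*m+1) * (2 * real k)" by (simp add: algebra_simps)
        show ?thesis unfolding e1 power_mult_distrib of_nat_power by (rule refl)
      qed
      have am: "(\<lambda>m. (1/(2*real((2*m+1)*k))^D) *\<^sub>R A k m) \<longlonglongrightarrow> \<nu> k"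
      proof -
        have lim: "(\<lambda>m. (1/(2*real k)^D) *\<^sub>R ((1 / real ((2*m+1)^D)) *\<^sub>R A k m)) \<longlonglongrightarrow> (1/(2*real k)^D) *\<^sub>R \<mu> k"
          by (intro tendsto_scaleR tendsto_const G1[OF rk])
        have fe: "(\<lambda>m. (1/(2*real k)^D) *\<^sub>R ((1 / real ((2*m+1)^D)) *\<^sub>R A k m)) = (\<lambda>m. (1/(2*real((2*m+1)*k))^D) *\<^sub>R A k m)"
        proof (rule ext)
          fix m
          show "(1/(2*real k)^D) *\<^sub>R ((1 / real ((2*m+1)^D)) *\<^sub>R A k m) = (1/(2*real((2*m+1)*k))^D) *\<^sub>R A k m"
            unfolding lamk scaleR_scaleR by (simp add: mult.commute)
        qed
        show ?thesis using lim unfolding fe \<nu>_def .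
      qed
      have evm: "eventually (\<lambda>m. norm ((1/(2*real((2*m+1)*k))^D) *\<^sub>R S((2*m+1)*k) - \<nu> k) \<le> \<delta> + \<delta>) sequentially"
      proof -
        have "eventually (\<lambda>m. dist ((1/(2*real((2*m+1)*k))^D) *\<^sub>R A k m) (\<nu> k) < \<delta>) sequentially"
          using am \<delta> by (rule tendstoD)
        then show ?thesis using eventually_ge_at_top[of 1]
        proof eventually_elim
          case (elim m)
          have "0 < (2*m+1)*k" using k1 by simp
          then have "0 < real ((2*m+1)*k)" by (simp only: of_nat_0_less_iff)
          then have pos: "0 < (2*real((2*m+1)*k))^D" by (intro zero_less_power) simp
          have "norm ((1/(2*real((2*m+1)*k))^D) *\<^sub>R S((2*m+1)*k) - \<nu> k)
              \<le> norm ((1/(2*real((2*m+1)*k))^D) *\<^sub>R S((2*m+1)*k) - (1/(2*real((2*m+1)*k))^D) *\<^sub>R A k m)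
                + norm ((1/(2*real((2*m+1)*k))^D) *\<^sub>R A k m - \<nu> k)"
            by (rule norm_diff_triangle_le[OF order_refl order_refl])
          also have "norm ((1/(2*real((2*m+1)*k))^D) *\<^sub>R S((2*m+1)*k) - (1/(2*real((2*m+1)*k))^D) *\<^sub>R A k m)
                = norm (S ((2*m+1)*k) - A k m) / (2 * real ((2*m+1)*k))^D"
            using pos by (simp add: scaleR_diff_right[symmetric])
          also have "\<dots> \<le> \<delta>" using bnd elim by simp
          finally show ?case using elim by (simp add: dist_norm)
        qed
      qed
      show "\<forall>\<eta>>0. eventually (\<lambda>n. norm (s n - \<nu> k) \<le> 2*\<delta> + \<eta>) sequentially"
      proof (intro allI impI)
        fix \<eta> :: real assume "0 < \<eta>"
        have "eventually (\<lambda>n. norm ((1 / (2 * real n)^D) *\<^sub>R S n - \<nu> k) \<le> (\<delta> + \<delta>) + \<eta>) sequentially"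
          by (rule sub1[OF k1 evm G2[OF k1] \<open>0 < \<eta>\<close>])
        then show "eventually (\<lambda>n. norm (s n - \<nu> k) \<le> 2*\<delta> + \<eta>) sequentially"
          unfolding s_def mult_2 .
      qed
    qed
  qed
  have "Cauchy s"
  proof (rule metric_CauchyI)
    fix e :: real assume e: "0 < e"
    obtain K where K: "\<And>k. K \<le> k \<Longrightarrow> \<forall>\<eta>>0. eventually (\<lambda>n. norm (s n - \<nu> k) \<le> 2*(e/8) + \<eta>) sequentially"
      using key[of "e/8"] e unfolding eventually_sequentially by auto
    have allK: "\<forall>\<eta>>0. eventually (\<lambda>n. norm (s n - \<nu> K) \<le> 2*(e/8) + \<eta>) sequentially"
      using K[of K] by simp
    have "eventually (\<lambda>n. norm (s n - \<nu> K) \<le> 2*(e/8) + e/8) sequentially"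
      by (rule allK[rule_format]) (use e in simp)
    then obtain N where N: "\<And>n. N \<le> n \<Longrightarrow> norm (s n - \<nu> K) \<le> 2*(e/8) + e/8"
      unfolding eventually_sequentially by auto
    show "\<exists>M. \<forall>m\<ge>M. \<forall>n\<ge>M. dist (s m) (s n) < e"
    proof (intro exI[of _ N] allI impI)
      fix m n assume m: "N \<le> m" and n: "N \<le> n"
      have "dist (s m) (s n) \<le> norm (s m - \<nu> K) + norm (s n - \<nu> K)"
      proof -
        have "norm (s m - s n) \<le> norm (s m - \<nu> K) + norm (\<nu> K - s n)"
          using norm_triangle_ineq[of "s m - \<nu> K" "\<nu> K - s n"] by simp
        then show ?thesis unfolding dist_norm by (simp add: norm_minus_commute)
      qed
      also have "\<dots> \<le> 6 * (e/8)" using N[OF m] N[OF n] by linarith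
      also have "\<dots> < e" using e by simp
      finally show "dist (s m) (s n) < e" .
    qed
  qed
  then obtain L where L: "s \<longlonglongrightarrow> L" using Cauchy_convergent_iff convergent_def by blast
  have "\<nu> \<longlonglongrightarrow> L"
  proof (rule LIMSEQ_I)
    fix e :: real assume e: "0 < e"
    obtain K where K: "\<And>k. K \<le> k \<Longrightarrow> \<forall>\<eta>>0. eventually (\<lambda>n. norm (s n - \<nu> k) \<le> 2*(e/4) + \<eta>) sequentially"
      using key[of "e/4"] e unfolding eventually_sequentially by auto
    show "\<exists>no. \<forall>k\<ge>no. norm (\<nu> k - L) < e"
    proof (intro exI[of _ K] allI impI)
      fix k assume "K \<le> k"
      then have allK: "\<forall>\<eta>>0. eventually (\<lambda>n. norm (s n - \<nu> k) \<le> 2*(e/4) + \<eta>) sequentially"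
        using K by simp
      have ev: "eventually (\<lambda>n. norm (s n - \<nu> k) \<le> 2*(e/4) + e/4) sequentially"
        by (rule allK[rule_format]) (use e in simp)
      have "(\<lambda>n. norm (s n - \<nu> k)) \<longlonglongrightarrow> norm (L - \<nu> k)" by (intro tendsto_intros L)
      then have "norm (L - \<nu> k) \<le> 2*(e/4) + e/4" by (rule tendsto_upperbound[OF _ ev]) simp
      then show "norm (\<nu> k - L) < e" using e by (simp add: norm_minus_commute)
    qed
  qed
  then show ?thesis using L unfolding s_def \<nu>_def by blast
qed

lemma lam_eq: "lam_vol TYPE('d::finite) n = (2 * real n) ^ CARD('d)"
  by (simp add: lam_vol_def)

theorem mainTheorem15:
  fixes M :: "'a measure" and S :: "nat \<Rightarrow> 'a \<Rightarrow> real^'h::finite"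
  assumes "prob_space M"
    and "\<forall>n\<ge>1. integrable M (S n)"
    and "strongly_regular M TYPE('d::finite) S"
    and "strongly_nearly_additive M TYPE('d) S"
    and "\<exists>B. \<forall>n\<ge>1. norm (integral\<^sup>L M (S n)) / lam_vol TYPE('d) n \<le> B"
  shows "\<exists>L :: real^'h.
           (\<lambda>n. (1 / lam_vol TYPE('d) n) *\<^sub>R integral\<^sup>L M (S n)) \<longlonglongrightarrow> L \<and>
           (AE \<omega> in M. (\<lambda>n. (1 / lam_vol TYPE('d) n) *\<^sub>R S n \<omega>) \<longlonglongrightarrow> L)"
proof -
  interpret P: prob_space M by (rule assms(1))
  from assms(4) obtain r and Sc :: "nat \<Rightarrow> int^'d \<Rightarrow> 'a \<Rightarrow> real^'h" where
    Sc1: "\<forall>n\<ge>1. (\<forall>z. Sc n z \<in> borel_measurable M \<and> distr M borel (Sc n z) = distr M borel (S n))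
               \<and> P.indep_vars (\<lambda>_. borel) (Sc n) UNIV"
    and Sc2: "AE \<omega> in M. (\<lambda>k. SUP m\<in>{1::nat..}.
                 ereal (norm (S ((2*m+1)*k) \<omega> - (\<Sum>z\<in>(zbox m :: (int^'d) set). Sc (k - r) z \<omega>))
                        / lam_vol TYPE('d) ((2*m+1)*k))) \<longlonglongrightarrow> 0"
    unfolding strongly_nearly_additive_def strongly_r_nearly_additive_def by blast
  have reg: "\<And>k. 1 \<le> k \<Longrightarrow> AE \<omega> in M. (\<lambda>n. norm (S n \<omega> - S ((2 * mblock k n + 1) * k) \<omega>) / lam_vol TYPE('d) n) \<longlonglongrightarrow> 0"
    using assms(3) unfolding strongly_regular_def by blast
  have G1: "AE \<omega> in M. (r + 1 \<le> k \<longrightarrow>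
      (\<lambda>m. (1 / real ((2*m+1)^CARD('d))) *\<^sub>R (\<Sum>z\<in>(zbox m :: (int^'d) set). Sc (k - r) z \<omega>)) \<longlonglongrightarrow> integral\<^sup>L M (S (k - r)))" for k
  proof (cases "r + 1 \<le> k")
    case True
    then have j: "1 \<le> k - r" by simp
    have "AE \<omega> in M. (\<lambda>m. (1 / real ((2*m+1)^CARD('d))) *\<^sub>R (\<Sum>z\<in>(zbox m :: (int^'d) set). Sc (k - r) z \<omega>)) \<longlonglongrightarrow> integral\<^sup>L M (S (k - r))"
    proof -
      have f1: "\<And>z. Sc (k - r) z \<in> borel_measurable M" using Sc1 j by blast
      have f2: "\<And>z. distr M borel (Sc (k - r) z) = distr M borel (S (k - r))" using Sc1 j by blast
      have f3: "P.indep_vars (\<lambda>_. borel) (Sc (k - r)) UNIV" using Sc1 j by blast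
      have f4: "integrable M (S (k - r))" using assms(2) j by blast
      then have f5: "S (k - r) \<in> borel_measurable M" by auto
      show ?thesis using P.box_avg[OF f1 f5 f3 f2 f4] .
    qed
    then show ?thesis by (rule AE_mp) (intro AE_I2 impI, simp)
  qed simp
  have G2: "AE \<omega> in M. (1 \<le> k \<longrightarrow> (\<lambda>n. norm (S n \<omega> - S ((2 * mblock k n + 1) * k) \<omega>) / lam_vol TYPE('d) n) \<longlonglongrightarrow> 0)" for k
  proof (cases "1 \<le> k")
    case True
    show ?thesis using reg[OF True] by (rule AE_mp) (intro AE_I2 impI, simp)
  qed simp
  define good where "good \<omega> \<longleftrightarrow>
     (\<forall>k. r + 1 \<le> k \<longrightarrow>
      (\<lambda>m. (1 / real ((2*m+1)^CARD('d))) *\<^sub>R (\<Sum>z\<in>(zbox m :: (int^'d) set). Sc (k - r) z \<omega>)) \<longlonglongrightarrow> integral\<^sup>L M (S (k - r))) \<and>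
     (\<forall>k. 1 \<le> k \<longrightarrow> (\<lambda>n. norm (S n \<omega> - S ((2 * mblock k n + 1) * k) \<omega>) / lam_vol TYPE('d) n) \<longlonglongrightarrow> 0) \<and>
     ((\<lambda>k. SUP m\<in>{1::nat..}.
                 ereal (norm (S ((2*m+1)*k) \<omega> - (\<Sum>z\<in>(zbox m :: (int^'d) set). Sc (k - r) z \<omega>))
                        / lam_vol TYPE('d) ((2*m+1)*k))) \<longlonglongrightarrow> 0)" for \<omega>
  have AEgood: "AE \<omega> in M. good \<omega>"
  proof -
    have "AE \<omega> in M. \<forall>k. r + 1 \<le> k \<longrightarrow>
      (\<lambda>m. (1 / real ((2*m+1)^CARD('d))) *\<^sub>R (\<Sum>z\<in>(zbox m :: (int^'d) set). Sc (k - r) z \<omega>)) \<longlonglongrightarrow> integral\<^sup>L M (S (k - r))"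
      unfolding AE_all_countable using G1 by blast
    moreover have "AE \<omega> in M. \<forall>k. 1 \<le> k \<longrightarrow> (\<lambda>n. norm (S n \<omega> - S ((2 * mblock k n + 1) * k) \<omega>) / lam_vol TYPE('d) n) \<longlonglongrightarrow> 0"
      unfolding AE_all_countable using G2 by blast
    ultimately show ?thesis using Sc2 unfolding good_def by eventually_elim blast
  qed
  define \<nu> where "\<nu> k = (1 / (2 * real k)^CARD('d)) *\<^sub>R integral\<^sup>L M (S (k - r))" for k
  have core_app: "\<exists>L. (\<lambda>n. (1 / lam_vol TYPE('d) n) *\<^sub>R S n \<omega>) \<longlonglongrightarrow> L \<and> \<nu> \<longlonglongrightarrow> L" if g: "good \<omega>" for \<omega>
  proof -
    have "\<exists>L. (\<lambda>n. (1/(2*real n)^CARD('d)) *\<^sub>R S n \<omega>) \<longlonglongrightarrow> L \<and> (\<lambda>k. (1/(2*real k)^CARD('d)) *\<^sub>R integral\<^sup>L M (S (k - r))) \<longlonglongrightarrow> L"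
    proof (rule core[where A="\<lambda>k m. \<Sum>z\<in>(zbox m :: (int^'d) set). Sc (k - r) z \<omega>" and r=r])
      show "(\<lambda>m. (1 / real ((2*m+1)^CARD('d))) *\<^sub>R (\<Sum>z\<in>(zbox m :: (int^'d) set). Sc (k - r) z \<omega>)) \<longlonglongrightarrow> integral\<^sup>L M (S (k - r))"
        if "r + 1 \<le> k" for k using g that unfolding good_def by blast
      show "(\<lambda>n. norm (S n \<omega> - S ((2 * mblock k n + 1) * k) \<omega>) / (2 * real n)^CARD('d)) \<longlonglongrightarrow> 0"
        if "1 \<le> k" for k using g that unfolding good_def lam_eq by blast
      show "(\<lambda>k. SUP m\<in>{1..}. ereal (norm (S ((2*m+1)*k) \<omega> - (\<Sum>z\<in>(zbox m :: (int^'d) set). Sc (k - r) z \<omega>)) / (2 * real ((2*m+1)*k))^CARD('d))) \<longlonglongrightarrow> 0"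
        using g unfolding good_def lam_eq by blast
    qed
    then show ?thesis unfolding lam_eq \<nu>_def .
  qed
  have "\<exists>\<omega>. good \<omega>"
  proof (rule ccontr)
    assume "\<not> (\<exists>\<omega>. good \<omega>)"
    then have "AE \<omega> in M. False" using AEgood by (rule_tac AE_mp[OF AEgood]) auto
    then show False by (simp add: P.AE_False)
  qed
  then obtain \<omega>0 where "good \<omega>0" by blast
  then obtain L where L: "\<nu> \<longlonglongrightarrow> L" using core_app by blast
  have as: "AE \<omega> in M. (\<lambda>n. (1 / lam_vol TYPE('d) n) *\<^sub>R S n \<omega>) \<longlonglongrightarrow> L"
    using AEgood
  proof (rule AE_mp, intro AE_I2 impI)
    fix \<omega> assume "good \<omega>"
    then obtain L' where L1: "(\<lambda>n. (1 / lam_vol TYPE('d) n) *\<^sub>R S n \<omega>) \<longlonglongrightarrow> L'" and L2: "\<nu> \<longlonglongrightarrow> L'"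
      using core_app by blast
    have "L' = L" using tendsto_unique[OF sequentially_bot L2 L] .
    then show "(\<lambda>n. (1 / lam_vol TYPE('d) n) *\<^sub>R S n \<omega>) \<longlonglongrightarrow> L" using L1 by simp
  qed
  have ex: "(\<lambda>n. (1 / lam_vol TYPE('d) n) *\<^sub>R integral\<^sup>L M (S n)) \<longlonglongrightarrow> L"
  proof -
    define q where "q j = (real (j + r) / real j) ^ CARD('d)" for j
    have "(\<lambda>j. real (j + r) / real j) \<longlonglongrightarrow> 1"
    proof -
      have "(\<lambda>j. 1 + real r / real j) \<longlonglongrightarrow> 1 + 0" by (intro tendsto_intros)
      moreover have "eventually (\<lambda>j. 1 + real r / real j = real (j + r) / real j) sequentially"
        using eventually_ge_at_top[of 1] by eventually_elim (simp add: field_simps)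
      ultimately show ?thesis by (simp add: Lim_transform_eventually)
    qed
    then have "q \<longlonglongrightarrow> 1 ^ CARD('d)" unfolding q_def by (intro tendsto_power)
    then have q1: "q \<longlonglongrightarrow> 1" by simp
    have "(\<lambda>j. \<nu> (j + r)) \<longlonglongrightarrow> L" using LIMSEQ_ignore_initial_segment[OF L] .
    then have "(\<lambda>j. q j *\<^sub>R \<nu> (j + r)) \<longlonglongrightarrow> 1 *\<^sub>R L" by (intro tendsto_scaleR q1)
    moreover have "eventually (\<lambda>j. q j *\<^sub>R \<nu> (j + r) = (1 / lam_vol TYPE('d) j) *\<^sub>R integral\<^sup>L M (S j)) sequentially"
      using eventually_ge_at_top[of 1]
    proof eventually_elim
      case (elim j)
      have jp: "0 < real j" using elim by simp
      have jr: "0 < real (j + r)" using elim by simp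
      have "q j * (1 / (2 * real (j + r))^CARD('d)) = 1 / (2 * real j)^CARD('d)"
      proof -
        have a: "(2 * real (j + r))^CARD('d) = 2^CARD('d) * real (j+r)^CARD('d)" by (simp only: power_mult_distrib)
        have b: "(2 * real j)^CARD('d) = 2^CARD('d) * real j^CARD('d)" by (simp only: power_mult_distrib)
        have c: "q j = real (j+r)^CARD('d) / real j^CARD('d)" unfolding q_def by (simp only: power_divide)
        have p1: "0 < real (j+r)^CARD('d)" "0 < real j^CARD('d)" using jp jr by simp_all
        show ?thesis unfolding a b c using p1 by (simp add: field_simps)
      qed
      then show ?case unfolding \<nu>_def lam_eq by simp
    qed
    ultimately show ?thesis by (simp add: Lim_transform_eventually)
  qed
  show ?thesis using ex as by blast
qed

end
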